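(* Let $\Omega\subset\mathbb{R}^2$ be a domain and $u\in C^{2}(\Omega)$. Let $S(u)=\{(x,y)\in\Omega:u_x-y=0,\ u_y+x=0\}$, on $\Omega\setminus S(u)$ let $N(u)=(u_x-y,u_y+x)/\sqrt{(u_x-y)^2+(u_y+x)^2}$ and $H=\operatorname{div}N(u)$. Let $$U=\begin{pmatrix}u_{xx}&u_{xy}-1\\ u_{xy}+1&u_{yy}\end{pmatrix}.$$ Let $p_0\in S(u)$ and suppose there are a constant $C>0$ and a neighborhood of $p_0$ on which $|H(p)|\le C/r(p)$ for $p\notin S(u)$, where $r(p)=|p-p_0|$. Then the following are equivalent: (1) $p_0$ is not isolated in $S(u)$; (2) $\det U(p_0)=0$; (3) there exists a small neighborhood of $p_0$ which intersects $S(u)$ in exactly a $C^{1}$ smooth curve passing through $p_0$.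
   Context: $\operatorname{div}$ is the Euclidean divergence in the $xy$-plane. *)

theory Defs
  imports "HOL-Analysis.Analysis"
begin

definition px :: "(real \<times> real \<Rightarrow> real) \<Rightarrow> real \<times> real \<Rightarrow> real" where
  "px f p = deriv (\<lambda>t. f (t, snd p)) (fst p)"

definition py :: "(real \<times> real \<Rightarrow> real) \<Rightarrow> real \<times> real \<Rightarrow> real" where
  "py f p = deriv (\<lambda>t. f (fst p, t)) (snd p)"

definition has_px :: "(real \<times> real \<Rightarrow> real) \<Rightarrow> real \<times> real \<Rightarrow> bool" where
  "has_px f p \<longleftrightarrow> (\<lambda>t. f (t, snd p)) differentiable (at (fst p))"

definition has_py :: "(real \<times> real \<Rightarrow> real) \<Rightarrow> real \<times> real \<Rightarrow> bool" where
  "has_py f p \<longleftrightarrow> (\<lambda>t. f (fst p, t)) differentiable (at (snd p))"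

definition C2_on :: "(real \<times> real) set \<Rightarrow> (real \<times> real \<Rightarrow> real) \<Rightarrow> bool" where
  "C2_on \<Omega> u \<longleftrightarrow>
     (\<forall>p\<in>\<Omega>. has_px u p \<and> has_py u p \<and>
              has_px (px u) p \<and> has_py (px u) p \<and> has_px (py u) p \<and> has_py (py u) p) \<and>
     continuous_on \<Omega> u \<and> continuous_on \<Omega> (px u) \<and> continuous_on \<Omega> (py u) \<and>
     continuous_on \<Omega> (px (px u)) \<and> continuous_on \<Omega> (py (px u)) \<and>
     continuous_on \<Omega> (px (py u)) \<and> continuous_on \<Omega> (py (py u))"

definition sing_set :: "(real \<times> real) set \<Rightarrow> (real \<times> real \<Rightarrow> real) \<Rightarrow> (real \<times> real) set" where
  "sing_set \<Omega> u = {p\<in>\<Omega>. px u p - snd p = 0 \<and> py u p + fst p = 0}"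

definition N1 :: "(real \<times> real \<Rightarrow> real) \<Rightarrow> real \<times> real \<Rightarrow> real" where
  "N1 u p = (px u p - snd p) / sqrt ((px u p - snd p)\<^sup>2 + (py u p + fst p)\<^sup>2)"

definition N2 :: "(real \<times> real \<Rightarrow> real) \<Rightarrow> real \<times> real \<Rightarrow> real" where
  "N2 u p = (py u p + fst p) / sqrt ((px u p - snd p)\<^sup>2 + (py u p + fst p)\<^sup>2)"

text \<open>H = div N(u) (Euclidean divergence), meaningful on \<Omega> \<setminus> S(u).\<close>
definition Hcurv :: "(real \<times> real \<Rightarrow> real) \<Rightarrow> real \<times> real \<Rightarrow> real" where
  "Hcurv u p = px (N1 u) p + py (N2 u) p"

definition detU :: "(real \<times> real \<Rightarrow> real) \<Rightarrow> real \<times> real \<Rightarrow> real" where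
  "detU u p = px (px u) p * py (py u) p - (py (px u) p - 1) * (py (px u) p + 1)"

definition C1_curve :: "(real \<Rightarrow> real \<times> real) \<Rightarrow> real \<Rightarrow> real \<Rightarrow> bool" where
  "C1_curve \<gamma> a b \<longleftrightarrow> a < b \<and> \<gamma> C1_differentiable_on {a<..<b} \<and>
     (\<forall>t\<in>{a<..<b}. vector_derivative \<gamma> (at t) \<noteq> 0) \<and>
     inj_on \<gamma> {a<..<b} \<and>
     continuous_on (\<gamma> ` {a<..<b}) (inv_into {a<..<b} \<gamma>)"

end

theory Submission
  imports Defs
begin

lemma has_px_D: "has_px f p \<Longrightarrow> ((\<lambda>t. f (t, snd p)) has_real_derivative px f p) (at (fst p))"
  unfolding has_px_def px_def by (simp add: DERIV_deriv_iff_real_differentiable)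

lemma has_py_D: "has_py f p \<Longrightarrow> ((\<lambda>t. f (fst p, t)) has_real_derivative py f p) (at (snd p))"
  unfolding has_py_def py_def by (simp add: DERIV_deriv_iff_real_differentiable)

lemma mvt_bound:
  fixes \<phi> \<phi>' :: "real \<Rightarrow> real"
  assumes d: "\<And>t. min a b \<le> t \<Longrightarrow> t \<le> max a b \<Longrightarrow> (\<phi> has_real_derivative \<phi>' t) (at t)"
    and bd: "\<And>t. min a b \<le> t \<Longrightarrow> t \<le> max a b \<Longrightarrow> \<bar>\<phi>' t - L\<bar> \<le> e"
  shows "\<bar>\<phi> b - \<phi> a - L*(b - a)\<bar> \<le> e*\<bar>b - a\<bar>"
proof -
  have gen: "\<bar>\<phi> y - \<phi> x - L*(y - x)\<bar> \<le> e*\<bar>y - x\<bar>" if "x < y" "min a b = x" "max a b = y" for x y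
  proof -
    have "\<exists>z. x < z \<and> z < y \<and> ((\<lambda>t. \<phi> t - L*t) y - (\<lambda>t. \<phi> t - L*t) x = (y - x) * (\<phi>' z - L))"
      by (rule MVT2[OF \<open>x<y\<close>]) (use d that in \<open>auto intro!: derivative_eq_intros\<close>)
    then obtain z where z: "x < z" "z < y" "\<phi> y - L*y - (\<phi> x - L*x) = (y - x) * (\<phi>' z - L)" by auto
    have "\<bar>\<phi> y - \<phi> x - L*(y - x)\<bar> = \<bar>y - x\<bar> * \<bar>\<phi>' z - L\<bar>"
      using z(3) by (simp add: algebra_simps abs_mult[symmetric])
    also have "\<dots> \<le> \<bar>y - x\<bar> * e" using bd[of z] z that by (intro mult_left_mono) auto
    finally show ?thesis by (simp add: mult.commute)
  qed
  consider "a < b" | "a = b" | "b < a" by linarith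
  then show ?thesis
  proof cases
    case 1 then show ?thesis using gen[of a b] by auto
  next
    case 2 then show ?thesis by simp
  next
    case 3 then have "\<bar>\<phi> a - \<phi> b - L*(a - b)\<bar> \<le> e*\<bar>a - b\<bar>" using gen[of b a] by auto
    then show ?thesis by (simp add: abs_minus_commute algebra_simps)
  qed
qed

lemma dist_pair_le: "dist p (t, s) \<le> \<bar>fst p - t\<bar> + \<bar>snd p - s\<bar>"
proof -
  have "dist p (t, s) \<le> dist p (t, snd p) + dist (t, snd p) (t, s)" by (rule dist_triangle)
  also have "dist p (t, snd p) = \<bar>fst p - t\<bar>"
    by (cases p) (simp add: dist_Pair_Pair dist_real_def)
  also have "dist (t, snd p) (t, s) = \<bar>snd p - s\<bar>"
    by (simp add: dist_Pair_Pair dist_real_def)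
  finally show ?thesis .
qed

lemma fst_le_dist: "\<bar>fst q - fst p\<bar> \<le> dist q p"
  using dist_fst_le[of q p] by (simp add: dist_real_def)
lemma snd_le_dist: "\<bar>snd q - snd p\<bar> \<le> dist q p"
  using dist_snd_le[of q p] by (simp add: dist_real_def)

lemma lin_from_partials:
  fixes f fx fy :: "real \<times> real \<Rightarrow> real"
  assumes "open \<Omega>" "p \<in> \<Omega>"
    and dx: "\<And>r. r \<in> \<Omega> \<Longrightarrow> ((\<lambda>t. f (t, snd r)) has_real_derivative fx r) (at (fst r))"
    and dy: "\<And>r. r \<in> \<Omega> \<Longrightarrow> ((\<lambda>t. f (fst r, t)) has_real_derivative fy r) (at (snd r))"
    and cx: "continuous_on \<Omega> fx" and cy: "continuous_on \<Omega> fy" and "e > 0"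
  shows "\<exists>\<delta>>0. ball p \<delta> \<subseteq> \<Omega> \<and> (\<forall>q\<in>ball p \<delta>. \<forall>q'\<in>ball p \<delta>.
     \<bar>f q - f q' - fx p * (fst q - fst q') - fy p * (snd q - snd q')\<bar> \<le> e * (\<bar>fst q - fst q'\<bar> + \<bar>snd q - snd q'\<bar>))"
proof -
  obtain d1 where d1: "d1 > 0" "ball p d1 \<subseteq> \<Omega>" using assms(1,2) open_contains_ball by blast
  obtain d2 where d2: "d2 > 0" "\<forall>r\<in>\<Omega>. dist r p < d2 \<longrightarrow> dist (fx r) (fx p) < e"
    using cx assms(2) \<open>e>0\<close> unfolding continuous_on_iff by blast
  obtain d3 where d3: "d3 > 0" "\<forall>r\<in>\<Omega>. dist r p < d3 \<longrightarrow> dist (fy r) (fy p) < e"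
    using cy assms(2) \<open>e>0\<close> unfolding continuous_on_iff by blast
  define d0 where "d0 = min d1 (min d2 d3)"
  have d0: "d0 > 0" using d1 d2 d3 by (simp add: d0_def)
  have good: "r \<in> \<Omega> \<and> \<bar>fx r - fx p\<bar> \<le> e \<and> \<bar>fy r - fy p\<bar> \<le> e" if "dist p r < d0" for r
  proof -
    have "r \<in> \<Omega>" using d1 that by (auto simp: d0_def)
    moreover have "dist r p < d2" "dist r p < d3" using that by (auto simp: d0_def dist_commute)
    ultimately show ?thesis using d2 d3 by (auto simp: dist_real_def less_imp_le)
  qed
  show ?thesis
  proof (intro exI[of _ "d0/2"] conjI ballI)
    show "d0/2 > 0" using d0 by simp
    show "ball p (d0/2) \<subseteq> \<Omega>"
    proof
      fix r assume "r \<in> ball p (d0/2)"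
      then have "dist p r < d0" using d0 by simp
      then show "r \<in> \<Omega>" using good by auto
    qed
  next
    fix q q' assume q: "q \<in> ball p (d0/2)" and q': "q' \<in> ball p (d0/2)"
    have q1: "\<bar>fst p - fst q\<bar> < d0/2" "\<bar>snd p - snd q\<bar> < d0/2"
      using q fst_le_dist[of p q] snd_le_dist[of p q] by (auto simp: dist_commute)
    have q1': "\<bar>fst p - fst q'\<bar> < d0/2" "\<bar>snd p - snd q'\<bar> < d0/2"
      using q' fst_le_dist[of p q'] snd_le_dist[of p q'] by (auto simp: dist_commute)
    have A: "\<bar>(\<lambda>t. f (t, snd q)) (fst q) - (\<lambda>t. f (t, snd q)) (fst q') - fx p * (fst q - fst q')\<bar>
             \<le> e * \<bar>fst q - fst q'\<bar>"
    proof (rule mvt_bound)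
      fix t assume t: "min (fst q') (fst q) \<le> t" "t \<le> max (fst q') (fst q)"
      have "\<bar>fst p - t\<bar> < d0/2" using t q1(1) q1'(1) unfolding abs_less_iff by (auto simp: min_def max_def split: if_splits)
      then have "dist p (t, snd q) < d0" using dist_pair_le[of p t "snd q"] q1 by auto
      then have g: "(t, snd q) \<in> \<Omega>" "\<bar>fx (t, snd q) - fx p\<bar> \<le> e" using good by auto
      show "((\<lambda>t. f (t, snd q)) has_real_derivative fx (t, snd q)) (at t)" using dx[OF g(1)] by simp
      show "\<bar>fx (t, snd q) - fx p\<bar> \<le> e" by fact
    qed
    have B: "\<bar>(\<lambda>t. f (fst q', t)) (snd q) - (\<lambda>t. f (fst q', t)) (snd q') - fy p * (snd q - snd q')\<bar>
             \<le> e * \<bar>snd q - snd q'\<bar>"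
    proof (rule mvt_bound)
      fix t assume t: "min (snd q') (snd q) \<le> t" "t \<le> max (snd q') (snd q)"
      have "\<bar>snd p - t\<bar> < d0/2" using t q1(2) q1'(2) unfolding abs_less_iff by (auto simp: min_def max_def split: if_splits)
      then have "dist p (fst q', t) < d0" using dist_pair_le[of p "fst q'" t] q1' by auto
      then have g: "(fst q', t) \<in> \<Omega>" "\<bar>fy (fst q', t) - fy p\<bar> \<le> e" using good by auto
      show "((\<lambda>t. f (fst q', t)) has_real_derivative fy (fst q', t)) (at t)" using dy[OF g(1)] by simp
      show "\<bar>fy (fst q', t) - fy p\<bar> \<le> e" by fact
    qed
    have "f q - f q' - fx p * (fst q - fst q') - fy p * (snd q - snd q') =
      (f (fst q, snd q) - f (fst q', snd q) - fx p * (fst q - fst q')) +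
      (f (fst q', snd q) - f (fst q', snd q') - fy p * (snd q - snd q'))" by simp
    then show "\<bar>f q - f q' - fx p * (fst q - fst q') - fy p * (snd q - snd q')\<bar> \<le> e * (\<bar>fst q - fst q'\<bar> + \<bar>snd q - snd q'\<bar>)"
      using A B by (simp add: distrib_left)
  qed
qed

lemma C2_D:
  assumes "C2_on \<Omega> u" "r \<in> \<Omega>"
  shows "((\<lambda>t. u (t, snd r)) has_real_derivative px u r) (at (fst r))"
    "((\<lambda>t. u (fst r, t)) has_real_derivative py u r) (at (snd r))"
    "((\<lambda>t. px u (t, snd r)) has_real_derivative px (px u) r) (at (fst r))"
    "((\<lambda>t. px u (fst r, t)) has_real_derivative py (px u) r) (at (snd r))"
    "((\<lambda>t. py u (t, snd r)) has_real_derivative px (py u) r) (at (fst r))"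
    "((\<lambda>t. py u (fst r, t)) has_real_derivative py (py u) r) (at (snd r))"
  using assms unfolding C2_on_def by (auto intro!: has_px_D has_py_D)

lemma C2_cont:
  assumes "C2_on \<Omega> u"
  shows "continuous_on \<Omega> u" "continuous_on \<Omega> (px u)" "continuous_on \<Omega> (py u)"
    "continuous_on \<Omega> (px (px u))" "continuous_on \<Omega> (py (px u))"
    "continuous_on \<Omega> (px (py u))" "continuous_on \<Omega> (py (py u))"
  using assms unfolding C2_on_def by auto

lemma schwarz:
  assumes "open \<Omega>" "C2_on \<Omega> u" "p \<in> \<Omega>"
  shows "px (py u) p = py (px u) p"
proof (rule ccontr)
  assume ne: "px (py u) p \<noteq> py (px u) p"
  define A where "A = py (px u) p"
  define B where "B = px (py u) p"
  define e where "e = \<bar>A - B\<bar>/4"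
  have e: "e > 0" using ne by (simp add: e_def A_def B_def)
  obtain d1 where d1: "d1 > 0" "ball p d1 \<subseteq> \<Omega>" and
    L1: "\<forall>q\<in>ball p d1. \<forall>q'\<in>ball p d1. \<bar>px u q - px u q' - px (px u) p * (fst q - fst q') - py (px u) p * (snd q - snd q')\<bar>
        \<le> e * (\<bar>fst q - fst q'\<bar> + \<bar>snd q - snd q'\<bar>)"
    using lin_from_partials[OF assms(1,3), of "px u" "px (px u)" "py (px u)" e]
      C2_D[OF assms(2)] C2_cont[OF assms(2)] e by blast
  obtain d2 where d2: "d2 > 0" "ball p d2 \<subseteq> \<Omega>" and
    L2: "\<forall>q\<in>ball p d2. \<forall>q'\<in>ball p d2. \<bar>py u q - py u q' - px (py u) p * (fst q - fst q') - py (py u) p * (snd q - snd q')\<bar>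
        \<le> e * (\<bar>fst q - fst q'\<bar> + \<bar>snd q - snd q'\<bar>)"
    using lin_from_partials[OF assms(1,3), of "py u" "px (py u)" "py (py u)" e]
      C2_D[OF assms(2)] C2_cont[OF assms(2)] e by blast
  define h where "h = min d1 d2 / 4"
  have h: "h > 0" using d1 d2 by (simp add: h_def)
  obtain x y where p: "p = (x, y)" by (cases p)
  have inb: "(s, t) \<in> ball p (min d1 d2)" if "x \<le> s" "s \<le> x + h" "y \<le> t" "t \<le> y + h" for s t
  proof -
    have "dist p (s, t) \<le> \<bar>x - s\<bar> + \<bar>y - t\<bar>" using dist_pair_le[of p s t] p by simp
    also have "\<dots> \<le> 2*h" using that by auto
    finally show ?thesis using h by (simp add: h_def)
  qed
  have inO: "(s, t) \<in> \<Omega>" if "x \<le> s" "s \<le> x + h" "y \<le> t" "t \<le> y + h" for s t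
    using inb[OF that] d1 by auto
  define D where "D = u (x+h, y+h) - u (x+h, y) - u (x, y+h) + u (x, y)"
  have "\<exists>z. x < z \<and> z < x + h \<and> ((\<lambda>s. u (s, y+h) - u (s, y)) (x+h) - (\<lambda>s. u (s, y+h) - u (s, y)) x
          = (x + h - x) * (px u (z, y+h) - px u (z, y)))"
  proof (rule MVT2)
    show "x < x + h" using h by simp
    fix s assume s: "x \<le> s" "s \<le> x + h"
    have r1: "(s, y+h) \<in> \<Omega>" "(s, y) \<in> \<Omega>" using inO s h by auto
    show "((\<lambda>s. u (s, y+h) - u (s, y)) has_real_derivative px u (s, y+h) - px u (s, y)) (at s)"
      using C2_D(1)[OF assms(2) r1(1)] C2_D(1)[OF assms(2) r1(2)] by (auto intro!: derivative_eq_intros)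
  qed
  then obtain z where z: "x < z" "z < x + h" "D = h * (px u (z, y+h) - px u (z, y))"
    by (auto simp: D_def)
  have m: "(z, y+h) \<in> ball p d1" "(z, y) \<in> ball p d1" using inb[of z "y+h"] inb[of z y] z h by auto
  have "\<bar>px u (z, y+h) - px u (z, y) - px (px u) p * (fst (z, y+h) - fst (z, y)) - py (px u) p * (snd (z, y+h) - snd (z, y))\<bar>
     \<le> e * (\<bar>fst (z, y+h) - fst (z, y)\<bar> + \<bar>snd (z, y+h) - snd (z, y)\<bar>)"
    using L1 m by blast
  then have "\<bar>px u (z, y+h) - px u (z, y) - A * h\<bar> \<le> e * h" using h by (simp add: A_def)
  moreover have "D - A*h*h = h * (px u (z, y+h) - px u (z, y) - A * h)" by (simp add: z(3) algebra_simps)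
  ultimately have D1: "\<bar>D - A*h*h\<bar> \<le> e*h*h" using h
    by (simp add: abs_mult)
  have "\<exists>z. y < z \<and> z < y + h \<and> ((\<lambda>t. u (x+h, t) - u (x, t)) (y+h) - (\<lambda>t. u (x+h, t) - u (x, t)) y
          = (y + h - y) * (py u (x+h, z) - py u (x, z)))"
  proof (rule MVT2)
    show "y < y + h" using h by simp
    fix t assume t: "y \<le> t" "t \<le> y + h"
    have r1: "(x+h, t) \<in> \<Omega>" "(x, t) \<in> \<Omega>" using inO t h by auto
    show "((\<lambda>t. u (x+h, t) - u (x, t)) has_real_derivative py u (x+h, t) - py u (x, t)) (at t)"
      using C2_D(2)[OF assms(2) r1(1)] C2_D(2)[OF assms(2) r1(2)] by (auto intro!: derivative_eq_intros)
  qed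
  then obtain w where w: "y < w" "w < y + h" "D = h * (py u (x+h, w) - py u (x, w))"
    by (auto simp: D_def algebra_simps)
  have m2: "(x+h, w) \<in> ball p d2" "(x, w) \<in> ball p d2" using inb[of "x+h" w] inb[of x w] w h by auto
  have "\<bar>py u (x+h, w) - py u (x, w) - px (py u) p * (fst (x+h, w) - fst (x, w)) - py (py u) p * (snd (x+h, w) - snd (x, w))\<bar>
     \<le> e * (\<bar>fst (x+h, w) - fst (x, w)\<bar> + \<bar>snd (x+h, w) - snd (x, w)\<bar>)"
    using L2 m2 by blast
  then have "\<bar>py u (x+h, w) - py u (x, w) - B * h\<bar> \<le> e * h" using h by (simp add: B_def)
  moreover have "D - B*h*h = h * (py u (x+h, w) - py u (x, w) - B * h)" by (simp add: w(3) algebra_simps)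
  ultimately have D2: "\<bar>D - B*h*h\<bar> \<le> e*h*h" using h
    by (simp add: abs_mult)
  have "\<bar>A - B\<bar> * (h*h) = \<bar>(D - B*h*h) - (D - A*h*h)\<bar>"
  proof -
    have "(D - B*h*h) - (D - A*h*h) = (A - B)*(h*h)" by (simp add: algebra_simps)
    then show ?thesis by (simp add: abs_mult)
  qed
  also have "\<dots> \<le> 2*e*(h*h)" using D1 D2 by linarith
  finally have "\<bar>A - B\<bar> \<le> 2*e" using h by simp
  then show False using e unfolding e_def by simp
qed

lemma deriv_normalized:
  fixes a c :: "real \<Rightarrow> real"
  assumes da: "(a has_real_derivative A) (at x)" and dc: "(c has_real_derivative C) (at x)"
    and pos: "(a x)\<^sup>2 + (c x)\<^sup>2 > 0"
  shows "((\<lambda>t. a t / sqrt ((a t)\<^sup>2 + (c t)\<^sup>2)) has_real_derivative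
          c x * (c x * A - a x * C) / (sqrt ((a x)\<^sup>2 + (c x)\<^sup>2))^3) (at x)"
proof -
  define S where "S = (a x)\<^sup>2 + (c x)\<^sup>2"
  define n where "n = sqrt S"
  have S: "S > 0" using pos by (simp add: S_def)
  have n: "n > 0" "n * n = S" using S by (auto simp: n_def)
  have dS: "((\<lambda>t. (a t)\<^sup>2 + (c t)\<^sup>2) has_real_derivative 2 * a x * A + 2 * c x * C) (at x)"
    using da dc by (auto intro!: derivative_eq_intros)
  have dn: "((\<lambda>t. sqrt ((a t)\<^sup>2 + (c t)\<^sup>2)) has_real_derivative (2 * a x * A + 2 * c x * C) * (inverse n / 2)) (at x)"
  proof -
    have "(sqrt has_real_derivative inverse n / 2) (at ((a x)\<^sup>2 + (c x)\<^sup>2))"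
      using DERIV_real_sqrt[OF S] by (simp add: S_def n_def)
    from DERIV_chain2[OF this dS] show ?thesis by (simp add: mult.commute)
  qed
  have "((\<lambda>t. a t / sqrt ((a t)\<^sup>2 + (c t)\<^sup>2)) has_real_derivative
     (A * n - a x * ((2 * a x * A + 2 * c x * C) * (inverse n / 2))) / (n * n)) (at x)"
  proof -
    have nz0: "sqrt S \<noteq> 0" using S by simp
    have nz: "sqrt ((a x)\<^sup>2 + (c x)\<^sup>2) \<noteq> 0" using nz0 unfolding S_def .
    have "((\<lambda>t. a t / sqrt ((a t)\<^sup>2 + (c t)\<^sup>2)) has_real_derivative
     (A * sqrt ((a x)\<^sup>2 + (c x)\<^sup>2) - a x * ((2 * a x * A + 2 * c x * C) * (inverse n / 2))) /
       (sqrt ((a x)\<^sup>2 + (c x)\<^sup>2) * sqrt ((a x)\<^sup>2 + (c x)\<^sup>2))) (at x)"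
      by (rule DERIV_divide[OF da dn nz])
    then show ?thesis by (simp only: n_def S_def)
  qed
  moreover have "(A * n - a x * ((2 * a x * A + 2 * c x * C) * (inverse n / 2))) / (n * n)
      = c x * (c x * A - a x * C) / n^3"
  proof -
    have "(A * n - a x * ((2 * a x * A + 2 * c x * C) * (inverse n / 2))) / (n * n)
        = (A * (n*n) - a x * (a x * A + c x * C)) / n^3"
      using n by (simp add: n(2)[symmetric] field_simps power3_eq_cube)
    also have "\<dots> = c x * (c x * A - a x * C) / n^3"
      using n unfolding S_def by (simp add: algebra_simps power2_eq_square)
    finally show ?thesis .
  qed
  ultimately show ?thesis unfolding n_def S_def by simp
qed

lemma H_formula:
  assumes C2: "C2_on \<Omega> u" and p: "p \<in> \<Omega>"
    and pos: "(px u p - snd p)\<^sup>2 + (py u p + fst p)\<^sup>2 > 0"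
  shows "Hcurv u p = (px (px u) p * (py u p + fst p)\<^sup>2
          - (px u p - snd p) * (py u p + fst p) * ((px (py u) p + 1) + (py (px u) p - 1))
          + py (py u) p * (px u p - snd p)\<^sup>2) / (sqrt ((px u p - snd p)\<^sup>2 + (py u p + fst p)\<^sup>2))^3"
proof -
  obtain x y where pxy: "p = (x, y)" by (cases p)
  have d1: "((\<lambda>t. px u (t, y) - y) has_real_derivative px (px u) p) (at x)"
    and d2: "((\<lambda>t. py u (t, y) + t) has_real_derivative px (py u) p + 1) (at x)"
    and d3: "((\<lambda>t. px u (x, t) - t) has_real_derivative py (px u) p - 1) (at y)"
    and d4: "((\<lambda>t. py u (x, t) + x) has_real_derivative py (py u) p) (at y)"
    using C2_D[OF C2 p] by (auto simp: pxy intro!: derivative_eq_intros)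
  have pos': "(px u (x, y) - y)\<^sup>2 + (py u (x, y) + x)\<^sup>2 > 0" using pos by (simp add: pxy)
  have "((\<lambda>t. N1 u (t, y)) has_real_derivative
      (py u (x, y) + x) * ((py u (x, y) + x) * px (px u) p - (px u (x, y) - y) * (px (py u) p + 1))
       / (sqrt ((px u (x, y) - y)\<^sup>2 + (py u (x, y) + x)\<^sup>2))^3) (at x)"
    using deriv_normalized[OF d1 d2] pos' unfolding N1_def by simp
  then have e1: "px (N1 u) p = (py u (x, y) + x) * ((py u (x, y) + x) * px (px u) p - (px u (x, y) - y) * (px (py u) p + 1))
       / (sqrt ((px u (x, y) - y)\<^sup>2 + (py u (x, y) + x)\<^sup>2))^3"
    unfolding px_def by (simp add: pxy DERIV_imp_deriv)
  have pos'': "(py u (x, y) + x)\<^sup>2 + (px u (x, y) - y)\<^sup>2 > 0" using pos' by simp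
  have "((\<lambda>t. N2 u (x, t)) has_real_derivative
      (px u (x, y) - y) * ((px u (x, y) - y) * py (py u) p - (py u (x, y) + x) * (py (px u) p - 1))
       / (sqrt ((py u (x, y) + x)\<^sup>2 + (px u (x, y) - y)\<^sup>2))^3) (at y)"
    using deriv_normalized[OF d4 d3] pos'' unfolding N2_def by (simp add: add.commute)
  then have e2: "py (N2 u) p = (px u (x, y) - y) * ((px u (x, y) - y) * py (py u) p - (py u (x, y) + x) * (py (px u) p - 1))
       / (sqrt ((px u (x, y) - y)\<^sup>2 + (py u (x, y) + x)\<^sup>2))^3"
    unfolding py_def by (simp add: pxy DERIV_imp_deriv add.commute)
  show ?thesis unfolding Hcurv_def e1 e2 by (simp add: pxy add_divide_distrib[symmetric] algebra_simps power2_eq_square)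
qed

lemma ift_pos:
  fixes f fx fy :: "real \<times> real \<Rightarrow> real"
  assumes "open \<Omega>" "p0 \<in> \<Omega>" "f p0 = 0" "fy p0 > 0"
    and dx: "\<And>r. r \<in> \<Omega> \<Longrightarrow> ((\<lambda>t. f (t, snd r)) has_real_derivative fx r) (at (fst r))"
    and dy: "\<And>r. r \<in> \<Omega> \<Longrightarrow> ((\<lambda>t. f (fst r, t)) has_real_derivative fy r) (at (snd r))"
    and cx: "continuous_on \<Omega> fx" and cy: "continuous_on \<Omega> fy"
  shows "\<exists>W a b g g'. open W \<and> p0 \<in> W \<and> W \<subseteq> \<Omega> \<and> a < fst p0 \<and> fst p0 < b \<and>
     (\<forall>t\<in>{a<..<b}. (g has_real_derivative g' t) (at t)) \<and> continuous_on {a<..<b} g' \<and>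
     W \<inter> {p. f p = 0} = (\<lambda>t. (t, g t)) ` {a<..<b}"
proof -
  obtain x0 y0 where p0: "p0 = (x0, y0)" by (cases p0)
  define c where "c = fy p0 / 2"
  have c: "c > 0" using assms(4) by (simp add: c_def)
  define K where "K = \<bar>fx p0\<bar> + 1"
  have K: "K > 0" by (simp add: K_def)
  obtain d1 where d1: "d1 > 0" "ball p0 d1 \<subseteq> \<Omega>" using assms(1,2) open_contains_ball by blast
  obtain d2 where d2: "d2 > 0" "\<forall>r\<in>\<Omega>. dist r p0 < d2 \<longrightarrow> dist (fx r) (fx p0) < 1"
    using cx assms(2) unfolding continuous_on_iff by (meson zero_less_one)
  obtain d3 where d3: "d3 > 0" "\<forall>r\<in>\<Omega>. dist r p0 < d3 \<longrightarrow> dist (fy r) (fy p0) < c"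
    using cy assms(2) c unfolding continuous_on_iff by blast
  define r where "r = min d1 (min d2 d3) / 3"
  have r: "r > 0" using d1 d2 d3 by (simp add: r_def)
  have box: "(s, t) \<in> \<Omega> \<and> fy (s, t) \<ge> c \<and> \<bar>fx (s, t)\<bar> \<le> K"
    if "\<bar>s - x0\<bar> \<le> r" "\<bar>t - y0\<bar> \<le> r" for s t
  proof -
    have "dist p0 (s, t) \<le> \<bar>x0 - s\<bar> + \<bar>y0 - t\<bar>" using dist_pair_le[of p0 s t] p0 by simp
    also have "\<dots> \<le> 2 * r" using that by linarith
    also have "\<dots> < min d1 (min d2 d3)" using r unfolding r_def by linarith
    finally have dd: "dist p0 (s, t) < min d1 (min d2 d3)" .
    have dd': "dist (s, t) p0 < d2" "dist (s, t) p0 < d3" using dd by (auto simp: dist_commute)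
    have inO: "(s, t) \<in> \<Omega>" using dd d1 by auto
    moreover have "dist (fy (s,t)) (fy p0) < c" using d3 inO dd' by blast
    moreover have "dist (fx (s,t)) (fx p0) < 1" using d2 inO dd' by blast
    ultimately show ?thesis unfolding c_def K_def dist_real_def abs_le_iff abs_less_iff by auto
  qed
  have mono: "f (s, t2) - f (s, t1) \<ge> c * (t2 - t1)"
    if "\<bar>s - x0\<bar> \<le> r" "\<bar>t1 - y0\<bar> \<le> r" "\<bar>t2 - y0\<bar> \<le> r" "t1 \<le> t2" for s t1 t2
  proof (cases "t1 = t2")
    case True then show ?thesis by simp
  next
    case False
    then have lt: "t1 < t2" using that by simp
    have "\<exists>z. t1 < z \<and> z < t2 \<and> (\<lambda>t. f (s, t)) t2 - (\<lambda>t. f (s, t)) t1 = (t2 - t1) * fy (s, z)"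
    proof (rule MVT2[OF lt])
      fix z assume z: "t1 \<le> z" "z \<le> t2"
      then have "\<bar>z - y0\<bar> \<le> r" using that by (auto simp: abs_le_iff)
      then have "(s, z) \<in> \<Omega>" using box that by blast
      from dy[OF this] show "((\<lambda>t. f (s, t)) has_real_derivative fy (s, z)) (at z)" by simp
    qed
    then obtain z where z: "t1 < z" "z < t2" "f (s, t2) - f (s, t1) = (t2 - t1) * fy (s, z)" by auto
    have "\<bar>z - y0\<bar> \<le> r" using z that by (auto simp: abs_le_iff)
    then have "fy (s, z) \<ge> c" using box that by blast
    then show ?thesis using z(3) lt by (simp add: mult.commute mult_right_mono)
  qed
  have mono_abs: "\<bar>f (s, t2) - f (s, t1)\<bar> \<ge> c * \<bar>t2 - t1\<bar>"
    if "\<bar>s - x0\<bar> \<le> r" "\<bar>t1 - y0\<bar> \<le> r" "\<bar>t2 - y0\<bar> \<le> r" for s t1 t2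
  proof (cases "t1 \<le> t2")
    case True then show ?thesis using mono[OF that True] by simp
  next
    case False then show ?thesis using mono[OF that(1,3,2)] by simp
  qed
  have lip: "\<bar>f (s2, t) - f (s1, t)\<bar> \<le> K * \<bar>s2 - s1\<bar>"
    if "\<bar>s1 - x0\<bar> \<le> r" "\<bar>s2 - x0\<bar> \<le> r" "\<bar>t - y0\<bar> \<le> r" for s1 s2 t
  proof -
    have "\<bar>(\<lambda>s. f (s, t)) s2 - (\<lambda>s. f (s, t)) s1 - 0 * (s2 - s1)\<bar> \<le> K * \<bar>s2 - s1\<bar>"
    proof (rule mvt_bound)
      fix z assume z: "min s1 s2 \<le> z" "z \<le> max s1 s2"
      then have "\<bar>z - x0\<bar> \<le> r" using that by (auto simp: abs_le_iff)
      then have b: "(z, t) \<in> \<Omega>" "\<bar>fx (z, t)\<bar> \<le> K" using box that by blast+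
      from dx[OF b(1)] show "((\<lambda>s. f (s, t)) has_real_derivative fx (z, t)) (at z)" by simp
      show "\<bar>fx (z, t) - 0\<bar> \<le> K" using b by simp
    qed
    then show ?thesis by simp
  qed
  define \<tau> where "\<tau> = min r (c * r / K)"
  have \<tau>: "\<tau> > 0" "\<tau> \<le> r" "K * \<tau> \<le> c * r" using r c K by (auto simp: \<tau>_def min_def field_simps)
  have f0: "f (x0, y0) = 0" using assms(3) p0 by simp
  have top: "f (s, y0 + r) > 0" and bot: "f (s, y0 - r) < 0" if s: "\<bar>s - x0\<bar> < \<tau>" for s
  proof -
    have sr: "\<bar>s - x0\<bar> \<le> r" using s \<tau> by linarith
    have "f (x0, y0 + r) - f (x0, y0) \<ge> c * r" using mono[of x0 y0 "y0 + r"] r by simp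
    moreover have "\<bar>f (s, y0 + r) - f (x0, y0 + r)\<bar> \<le> K * \<bar>s - x0\<bar>" using lip[of x0 s "y0 + r"] sr r by simp
    moreover have "K * \<bar>s - x0\<bar> < c * r" using s K \<tau> by (smt (verit) mult_strict_left_mono)
    ultimately show "f (s, y0 + r) > 0" using f0 by linarith
    have "f (x0, y0) - f (x0, y0 - r) \<ge> c * r" using mono[of x0 "y0 - r" y0] r by simp
    moreover have "\<bar>f (s, y0 - r) - f (x0, y0 - r)\<bar> \<le> K * \<bar>s - x0\<bar>" using lip[of x0 s "y0 - r"] sr r by simp
    ultimately show "f (s, y0 - r) < 0" using f0 \<open>K * \<bar>s - x0\<bar> < c * r\<close> by linarith
  qed
  have exist: "\<exists>t. \<bar>t - y0\<bar> < r \<and> f (s, t) = 0" if s: "\<bar>s - x0\<bar> < \<tau>" for s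
  proof -
    have sr: "\<bar>s - x0\<bar> \<le> r" using s \<tau> by linarith
    have "continuous_on {y0 - r .. y0 + r} (\<lambda>t. f (s, t))"
    proof (rule continuous_at_imp_continuous_on, rule ballI)
      fix t assume "t \<in> {y0 - r .. y0 + r}"
      then have "\<bar>t - y0\<bar> \<le> r" by auto
      then have "(s, t) \<in> \<Omega>" using box sr by blast
      from DERIV_isCont[OF dy[OF this]] show "isCont (\<lambda>t. f (s, t)) t" by simp
    qed
    then obtain t where t: "y0 - r \<le> t" "t \<le> y0 + r" "f (s, t) = 0"
      using IVT'[of "\<lambda>t. f (s, t)" "y0 - r" 0 "y0 + r"] bot[OF s] top[OF s] r by auto
    then have "t \<noteq> y0 - r" "t \<noteq> y0 + r" using bot[OF s] top[OF s] by auto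
    then show ?thesis using t by (intro exI[of _ t]) auto
  qed
  have uniq: "t1 = t2" if "\<bar>s - x0\<bar> \<le> r" "\<bar>t1 - y0\<bar> \<le> r" "\<bar>t2 - y0\<bar> \<le> r" "f (s, t1) = 0" "f (s, t2) = 0" for s t1 t2
    using mono_abs[OF that(1-3)] that(4,5) c by (simp add: zero_less_mult_iff) (smt (verit) mult_pos_pos)
  define g where "g s = (THE t. \<bar>t - y0\<bar> < r \<and> f (s, t) = 0)" for s
  have g: "\<bar>g s - y0\<bar> < r \<and> f (s, g s) = 0" if s: "\<bar>s - x0\<bar> < \<tau>" for s
  proof -
    have sr: "\<bar>s - x0\<bar> \<le> r" using s \<tau> by linarith
    obtain t where t: "\<bar>t - y0\<bar> < r \<and> f (s, t) = 0" using exist[OF s] by blast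
    have "(THE t. \<bar>t - y0\<bar> < r \<and> f (s, t) = 0) = t"
      apply (rule the_equality)
      using t apply blast
      using uniq sr t by auto
    then show ?thesis using t by (simp add: g_def)
  qed
  define I where "I = {x0 - \<tau><..<x0 + \<tau>}"
  have I: "s \<in> I \<longleftrightarrow> \<bar>s - x0\<bar> < \<tau>" for s by (auto simp: I_def abs_less_iff)
  define W where "W = I \<times> {y0 - r<..<y0 + r}"
  have Wopen: "open W" unfolding W_def I_def by (intro open_Times) auto
  have p0W: "p0 \<in> W" using p0 \<tau> r by (auto simp: W_def I_def)
  have WO: "W \<subseteq> \<Omega>"
  proof
    fix q assume "q \<in> W"
    then obtain s t where q: "q = (s, t)" "\<bar>s - x0\<bar> < \<tau>" "\<bar>t - y0\<bar> < r"
      by (auto simp: W_def I abs_less_iff) 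
    then show "q \<in> \<Omega>" using box[of s t] \<tau> by auto
  qed
  have graph: "W \<inter> {p. f p = 0} = (\<lambda>t. (t, g t)) ` I"
  proof (intro equalityI subsetI)
    fix q assume "q \<in> W \<inter> {p. f p = 0}"
    then obtain s t where q: "q = (s, t)" "\<bar>s - x0\<bar> < \<tau>" "\<bar>t - y0\<bar> < r" "f (s, t) = 0"
      by (auto simp: W_def I abs_less_iff)
    have "t = g s" using uniq[of s t "g s"] g[OF q(2)] q \<tau> by auto
    then show "q \<in> (\<lambda>t. (t, g t)) ` I" using q I by auto
  next
    fix q assume "q \<in> (\<lambda>t. (t, g t)) ` I"
    then obtain s where q: "q = (s, g s)" "\<bar>s - x0\<bar> < \<tau>" using I by auto
    then show "q \<in> W \<inter> {p. f p = 0}" using g[OF q(2)] by (auto simp: W_def I abs_less_iff)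
  qed
  have glip: "c * \<bar>g s2 - g s1\<bar> \<le> K * \<bar>s2 - s1\<bar>" if "s1 \<in> I" "s2 \<in> I" for s1 s2
  proof -
    have s: "\<bar>s1 - x0\<bar> < \<tau>" "\<bar>s2 - x0\<bar> < \<tau>" using that I by auto
    have gg: "\<bar>g s1 - y0\<bar> < r" "f (s1, g s1) = 0" "\<bar>g s2 - y0\<bar> < r" "f (s2, g s2) = 0" using g s by auto
    have "c * \<bar>g s2 - g s1\<bar> \<le> \<bar>f (s2, g s2) - f (s2, g s1)\<bar>" using mono_abs[of s2 "g s1" "g s2"] s gg \<tau> by auto
    also have "\<dots> = \<bar>f (s2, g s1) - f (s1, g s1)\<bar>" using gg by simp
    also have "\<dots> \<le> K * \<bar>s2 - s1\<bar>" using lip[of s1 s2 "g s1"] s gg \<tau> by auto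
    finally show ?thesis .
  qed
  define g' where "g' s = - fx (s, g s) / fy (s, g s)" for s
  have gI: "(s, g s) \<in> \<Omega> \<and> fy (s, g s) \<ge> c" if "s \<in> I" for s
    using box[of s "g s"] g[of s] that I \<tau> by auto
  have gder: "(g has_real_derivative g' s1) (at s1)" if s1: "s1 \<in> I" for s1
  proof -
    define q1 where "q1 = (s1, g s1)"
    have q1: "q1 \<in> \<Omega>" "fy q1 \<ge> c" using gI[OF s1] by (auto simp: q1_def)
    have f1: "f q1 = 0" using g[of s1] s1 I by (simp add: q1_def)
    define M where "M = 1 + K / c"
    have M: "M > 0" using K c by (simp add: M_def add_pos_pos)
    show ?thesis unfolding has_field_derivative_iff LIM_eq
    proof (intro allI impI)
      fix \<epsilon> :: real assume \<epsilon>: "\<epsilon> > 0"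
      define e where "e = \<epsilon> * c / (2 * M)"
      have e: "e > 0" using \<epsilon> c M by (simp add: e_def)
      obtain \<delta> where \<delta>: "\<delta> > 0" "ball q1 \<delta> \<subseteq> \<Omega>" and
        L: "\<forall>q\<in>ball q1 \<delta>. \<forall>q'\<in>ball q1 \<delta>. \<bar>f q - f q' - fx q1 * (fst q - fst q') - fy q1 * (snd q - snd q')\<bar>
           \<le> e * (\<bar>fst q - fst q'\<bar> + \<bar>snd q - snd q'\<bar>)"
        using lin_from_partials[OF assms(1) q1(1) dx dy cx cy e] by blast
      have "\<exists>\<sigma>>0. \<forall>s. \<bar>s - s1\<bar> < \<sigma> \<longrightarrow> s \<in> I"
        using s1 unfolding I_def by (intro exI[of _ "min (s1 - (x0 - \<tau>)) (x0 + \<tau> - s1)"]) (auto simp: abs_less_iff)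
      then obtain \<sigma> where \<sigma>: "\<sigma> > 0" "\<And>s. \<bar>s - s1\<bar> < \<sigma> \<Longrightarrow> s \<in> I" by blast
      show "\<exists>sa>0. \<forall>s. s \<noteq> s1 \<and> norm (s - s1) < sa \<longrightarrow> norm ((g s - g s1) / (s - s1) - g' s1) < \<epsilon>"
      proof (intro exI[of _ "min \<sigma> (\<delta> / M)"] conjI allI impI)
        show "min \<sigma> (\<delta> / M) > 0" using \<sigma> \<delta> M by simp
        fix s assume s: "s \<noteq> s1 \<and> norm (s - s1) < min \<sigma> (\<delta> / M)"
        have sI: "s \<in> I" using s \<sigma> by auto
        have hx: "\<bar>s - s1\<bar> > 0" using s by simp
        have gl: "\<bar>g s - g s1\<bar> \<le> (K / c) * \<bar>s - s1\<bar>"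
          using glip[OF s1 sI] c by (simp add: field_simps)
        have sum: "\<bar>s - s1\<bar> + \<bar>g s - g s1\<bar> \<le> M * \<bar>s - s1\<bar>"
          using gl by (simp add: M_def algebra_simps)
        have "dist q1 (s, g s) \<le> \<bar>s1 - s\<bar> + \<bar>g s1 - g s\<bar>" using dist_pair_le[of q1 s "g s"] by (simp add: q1_def)
        also have "\<dots> \<le> M * \<bar>s - s1\<bar>" using sum by (simp add: abs_minus_commute)
        also have "\<dots> < \<delta>" using s M by (simp add: field_simps)
        finally have inb: "(s, g s) \<in> ball q1 \<delta>" by simp
        have q1b: "q1 \<in> ball q1 \<delta>" using \<delta> by simp
        have fs: "f (s, g s) = 0" using g[of s] sI I by simp
        have "\<bar>f (s, g s) - f q1 - fx q1 * (fst (s, g s) - fst q1) - fy q1 * (snd (s, g s) - snd q1)\<bar>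
           \<le> e * (\<bar>fst (s, g s) - fst q1\<bar> + \<bar>snd (s, g s) - snd q1\<bar>)"
          using L inb q1b by blast
        then have A: "\<bar>fx q1 * (s - s1) + fy q1 * (g s - g s1)\<bar> \<le> e * (M * \<bar>s - s1\<bar>)"
          using fs f1 sum e by (simp add: q1_def) (smt (verit) mult_left_mono)
        have fyp: "fy q1 > 0" using q1 c by simp
        have "(g s - g s1) / (s - s1) - g' s1 = (fx q1 * (s - s1) + fy q1 * (g s - g s1)) / (fy q1 * (s - s1))"
          using fyp hx by (simp add: g'_def q1_def field_simps)
        then have "\<bar>(g s - g s1) / (s - s1) - g' s1\<bar> = \<bar>fx q1 * (s - s1) + fy q1 * (g s - g s1)\<bar> / (fy q1 * \<bar>s - s1\<bar>)"
          using fyp by (simp add: abs_mult)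
        also have "\<dots> \<le> e * (M * \<bar>s - s1\<bar>) / (c * \<bar>s - s1\<bar>)"
          using A q1 c hx by (intro frac_le) auto
        also have "\<dots> = \<epsilon> / 2" using hx c M by (simp add: e_def field_simps)
        also have "\<dots> < \<epsilon>" using \<epsilon> by simp
        finally show "norm ((g s - g s1) / (s - s1) - g' s1) < \<epsilon>" by simp
      qed
    qed
  qed
  have gcont: "continuous_on I g"
    using gder by (intro continuous_at_imp_continuous_on) (auto intro: DERIV_isCont)
  have g'cont: "continuous_on I g'"
  proof -
    have pc: "continuous_on I (\<lambda>s. (s, g s))" using gcont by (intro continuous_intros)
    have sub: "(\<lambda>s. (s, g s)) ` I \<subseteq> \<Omega>" using gI by auto
    have "continuous_on I (\<lambda>s. fx (s, g s))" using continuous_on_compose2[OF cx pc sub] .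
    moreover have "continuous_on I (\<lambda>s. fy (s, g s))" using continuous_on_compose2[OF cy pc sub] .
    ultimately show ?thesis unfolding g'_def using gI c
      by (intro continuous_intros) (auto, smt (verit))
  qed
  show ?thesis
    apply (rule exI[of _ W], rule exI[of _ "x0 - \<tau>"], rule exI[of _ "x0 + \<tau>"], rule exI[of _ g], rule exI[of _ g'])
    using Wopen p0W WO \<tau> gder g'cont graph p0 by (auto simp: I_def)
qed

lemma ift_any:
  fixes f fx fy :: "real \<times> real \<Rightarrow> real"
  assumes "open \<Omega>" "p0 \<in> \<Omega>" "f p0 = 0" "fy p0 \<noteq> 0"
    and dx: "\<And>r. r \<in> \<Omega> \<Longrightarrow> ((\<lambda>t. f (t, snd r)) has_real_derivative fx r) (at (fst r))"
    and dy: "\<And>r. r \<in> \<Omega> \<Longrightarrow> ((\<lambda>t. f (fst r, t)) has_real_derivative fy r) (at (snd r))"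
    and cx: "continuous_on \<Omega> fx" and cy: "continuous_on \<Omega> fy"
  shows "\<exists>W a b g g'. open W \<and> p0 \<in> W \<and> W \<subseteq> \<Omega> \<and> a < fst p0 \<and> fst p0 < b \<and>
     (\<forall>t\<in>{a<..<b}. (g has_real_derivative g' t) (at t)) \<and> continuous_on {a<..<b} g' \<and>
     W \<inter> {p. f p = 0} = (\<lambda>t. (t, g t)) ` {a<..<b}"
proof (cases "fy p0 > 0")
  case True then show ?thesis using ift_pos[OF assms(1-3) True dx dy cx cy] by blast
next
  case False
  then have neg: "(\<lambda>p. - fy p) p0 > 0" using assms(4) by simp
  have "\<exists>W a b g g'. open W \<and> p0 \<in> W \<and> W \<subseteq> \<Omega> \<and> a < fst p0 \<and> fst p0 < b \<and>
     (\<forall>t\<in>{a<..<b}. (g has_real_derivative g' t) (at t)) \<and> continuous_on {a<..<b} g' \<and>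
     W \<inter> {p. - f p = 0} = (\<lambda>t. (t, g t)) ` {a<..<b}"
  proof (rule ift_pos[of \<Omega> p0 "\<lambda>p. - f p" "\<lambda>p. - fy p" "\<lambda>p. - fx p"])
    show "open \<Omega>" "p0 \<in> \<Omega>" using assms by auto
    show "- f p0 = 0" using assms by simp
    show "0 < - fy p0" using neg by simp
    show "continuous_on \<Omega> (\<lambda>p. - fx p)" "continuous_on \<Omega> (\<lambda>p. - fy p)"
      using cx cy by (auto intro: continuous_intros)
    fix r assume r: "r \<in> \<Omega>"
    show "((\<lambda>t. - f (t, snd r)) has_real_derivative - fx r) (at (fst r))"
      using dx[OF r] by (rule DERIV_minus)
    show "((\<lambda>t. - f (fst r, t)) has_real_derivative - fy r) (at (snd r))"
      using dy[OF r] by (rule DERIV_minus)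
  qed
  then show ?thesis by simp
qed

lemma C1_curve_graph:
  fixes g g' :: "real \<Rightarrow> real"
  assumes "a < b" and d: "\<forall>t\<in>{a<..<b}. (g has_real_derivative g' t) (at t)"
    and c: "continuous_on {a<..<b} g'"
  shows "C1_curve (\<lambda>t. (t, g t)) a b" "C1_curve (\<lambda>t. (g t, t)) a b"
proof -
  have vd1: "((\<lambda>t. (t, g t)) has_vector_derivative (1, g' t)) (at t)" if "t \<in> {a<..<b}" for t
  proof -
    have "(g has_vector_derivative g' t) (at t)" using d that has_real_derivative_iff_has_vector_derivative by blast
    then show ?thesis by (intro has_vector_derivative_Pair has_vector_derivative_id)
  qed
  have vd2: "((\<lambda>t. (g t, t)) has_vector_derivative (g' t, 1)) (at t)" if "t \<in> {a<..<b}" for t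
  proof -
    have "(g has_vector_derivative g' t) (at t)" using d that has_real_derivative_iff_has_vector_derivative by blast
    then show ?thesis by (intro has_vector_derivative_Pair has_vector_derivative_id)
  qed
  have c1: "continuous_on {a<..<b} (\<lambda>t. (1::real, g' t))" using c by (intro continuous_intros)
  have c2: "continuous_on {a<..<b} (\<lambda>t. (g' t, 1::real))" using c by (intro continuous_intros)
  show "C1_curve (\<lambda>t. (t, g t)) a b"
    unfolding C1_curve_def
  proof (intro conjI ballI)
    show "a < b" by fact
    show "(\<lambda>t. (t, g t)) C1_differentiable_on {a<..<b}"
      unfolding C1_differentiable_on_def using vd1 c1 by (intro exI[of _ "\<lambda>t. (1, g' t)"]) auto
    fix t assume t: "t \<in> {a<..<b}"
    show "vector_derivative (\<lambda>t. (t, g t)) (at t) \<noteq> 0"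
      using vector_derivative_at[OF vd1[OF t]] by (simp add: zero_prod_def)
  next
    show "inj_on (\<lambda>t. (t, g t)) {a<..<b}" by (auto simp: inj_on_def)
    have A: "continuous_on ((\<lambda>t. (t, g t)) ` {a<..<b}) fst" by (intro continuous_intros)
    have B: "\<And>q. q \<in> (\<lambda>t. (t, g t)) ` {a<..<b} \<Longrightarrow> fst q = inv_into {a<..<b} (\<lambda>t. (t, g t)) q"
      by (auto intro!: inv_into_f_f[symmetric] simp: inj_on_def)
    have "continuous_on ((\<lambda>t. (t, g t)) ` {a<..<b}) (inv_into {a<..<b} (\<lambda>t. (t, g t))) \<longleftrightarrow> continuous_on ((\<lambda>t. (t, g t)) ` {a<..<b}) fst"
      by (rule continuous_on_cong[OF refl]) (simp add: B)
    then show "continuous_on ((\<lambda>t. (t, g t)) ` {a<..<b}) (inv_into {a<..<b} (\<lambda>t. (t, g t)))" using A by simp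
  qed
  show "C1_curve (\<lambda>t. (g t, t)) a b"
    unfolding C1_curve_def
  proof (intro conjI ballI)
    show "a < b" by fact
    show "(\<lambda>t. (g t, t)) C1_differentiable_on {a<..<b}"
      unfolding C1_differentiable_on_def using vd2 c2 by (intro exI[of _ "\<lambda>t. (g' t, 1)"]) auto
    fix t assume t: "t \<in> {a<..<b}"
    show "vector_derivative (\<lambda>t. (g t, t)) (at t) \<noteq> 0"
      using vector_derivative_at[OF vd2[OF t]] by (simp add: zero_prod_def)
  next
    show "inj_on (\<lambda>t. (g t, t)) {a<..<b}" by (auto simp: inj_on_def)
    have A: "continuous_on ((\<lambda>t. (g t, t)) ` {a<..<b}) snd" by (intro continuous_intros)
    have B: "\<And>q. q \<in> (\<lambda>t. (g t, t)) ` {a<..<b} \<Longrightarrow> snd q = inv_into {a<..<b} (\<lambda>t. (g t, t)) q"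
      by (auto intro!: inv_into_f_f[symmetric] simp: inj_on_def)
    have "continuous_on ((\<lambda>t. (g t, t)) ` {a<..<b}) (inv_into {a<..<b} (\<lambda>t. (g t, t))) \<longleftrightarrow> continuous_on ((\<lambda>t. (g t, t)) ` {a<..<b}) snd"
      by (rule continuous_on_cong[OF refl]) (simp add: B)
    then show "continuous_on ((\<lambda>t. (g t, t)) ` {a<..<b}) (inv_into {a<..<b} (\<lambda>t. (g t, t)))" using A by simp
  qed
qed

lemma curve_from_ift:
  fixes f fx fy :: "real \<times> real \<Rightarrow> real"
  assumes "open \<Omega>" "p0 \<in> \<Omega>" "f p0 = 0" "fx p0 \<noteq> 0 \<or> fy p0 \<noteq> 0"
    and dx: "\<And>r. r \<in> \<Omega> \<Longrightarrow> ((\<lambda>t. f (t, snd r)) has_real_derivative fx r) (at (fst r))"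
    and dy: "\<And>r. r \<in> \<Omega> \<Longrightarrow> ((\<lambda>t. f (fst r, t)) has_real_derivative fy r) (at (snd r))"
    and cx: "continuous_on \<Omega> fx" and cy: "continuous_on \<Omega> fy"
  shows "\<exists>W. open W \<and> p0 \<in> W \<and> W \<subseteq> \<Omega> \<and> (\<exists>\<gamma> a b. C1_curve \<gamma> a b \<and> p0 \<in> \<gamma> ` {a<..<b} \<and>
           W \<inter> {p. f p = 0} = \<gamma> ` {a<..<b})"
proof (cases "fy p0 \<noteq> 0")
  case True
  obtain W a b g g' where W: "open W" "p0 \<in> W" "W \<subseteq> \<Omega>" "a < fst p0" "fst p0 < b"
    "\<forall>t\<in>{a<..<b}. (g has_real_derivative g' t) (at t)" "continuous_on {a<..<b} g'"
    "W \<inter> {p. f p = 0} = (\<lambda>t. (t, g t)) ` {a<..<b}"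
    using ift_any[OF assms(1-3) True dx dy cx cy] by blast
  have "p0 \<in> (\<lambda>t. (t, g t)) ` {a<..<b}" using W(2,8) assms(3) by blast
  then show ?thesis using W C1_curve_graph(1)[of a b g g'] by (intro exI[of _ W]) auto
next
  case False
  then have fx0: "fx p0 \<noteq> 0" using assms(4) by simp
  define sw :: "real \<times> real \<Rightarrow> real \<times> real" where "sw p = (snd p, fst p)" for p
  have sw2: "sw (sw p) = p" for p by (simp add: sw_def)
  have csw: "continuous_on A sw" for A unfolding sw_def by (intro continuous_intros)
  define \<Omega>' where "\<Omega>' = sw -` \<Omega>"
  have o': "open \<Omega>'" unfolding \<Omega>'_def using assms(1) csw by (intro open_vimage) auto
  have p0': "sw p0 \<in> \<Omega>'" using assms(2) by (simp add: \<Omega>'_def sw2)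
  have swO: "sw ` \<Omega>' \<subseteq> \<Omega>" by (auto simp: \<Omega>'_def)
  have dx': "((\<lambda>t. (f \<circ> sw) (t, snd r)) has_real_derivative (fy \<circ> sw) r) (at (fst r))" if "r \<in> \<Omega>'" for r
    using dy[of "sw r"] that by (simp add: \<Omega>'_def sw_def o_def)
  have dy': "((\<lambda>t. (f \<circ> sw) (fst r, t)) has_real_derivative (fx \<circ> sw) r) (at (snd r))" if "r \<in> \<Omega>'" for r
    using dx[of "sw r"] that by (simp add: \<Omega>'_def sw_def o_def)
  have cx': "continuous_on \<Omega>' (fy \<circ> sw)" using continuous_on_compose[OF csw] cy swO continuous_on_subset by blast
  have cy': "continuous_on \<Omega>' (fx \<circ> sw)" using continuous_on_compose[OF csw] cx swO continuous_on_subset by blast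
  obtain W' a b g g' where W: "open W'" "sw p0 \<in> W'" "W' \<subseteq> \<Omega>'" "a < fst (sw p0)" "fst (sw p0) < b"
    "\<forall>t\<in>{a<..<b}. (g has_real_derivative g' t) (at t)" "continuous_on {a<..<b} g'"
    "W' \<inter> {p. (f \<circ> sw) p = 0} = (\<lambda>t. (t, g t)) ` {a<..<b}"
    using ift_any[OF o' p0' _ _ dx' dy' cx' cy'] assms(3) fx0 by (auto simp: sw2)
  define W where "W = sw -` W'"
  have Wo: "open W" unfolding W_def using W(1) csw by (intro open_vimage) auto
  have p0W: "p0 \<in> W" using W(2) by (simp add: W_def)
  have WO: "W \<subseteq> \<Omega>"
  proof
    fix q assume "q \<in> W"
    then have "sw q \<in> \<Omega>'" using W(3) by (auto simp: W_def)
    then show "q \<in> \<Omega>" by (simp add: \<Omega>'_def sw2)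
  qed
  have img: "W \<inter> {p. f p = 0} = (\<lambda>t. (g t, t)) ` {a<..<b}"
  proof -
    have "W \<inter> {p. f p = 0} = sw ` (W' \<inter> {p. (f \<circ> sw) p = 0})"
    proof (intro equalityI subsetI)
      fix q assume "q \<in> W \<inter> {p. f p = 0}"
      then have "sw q \<in> W' \<inter> {p. (f \<circ> sw) p = 0}" by (simp add: W_def sw2)
      then show "q \<in> sw ` (W' \<inter> {p. (f \<circ> sw) p = 0})" using sw2[of q] by (metis image_eqI)
    next
      fix q assume "q \<in> sw ` (W' \<inter> {p. (f \<circ> sw) p = 0})"
      then obtain q' where "q = sw q'" "q' \<in> W'" "f (sw q') = 0" by auto
      then show "q \<in> W \<inter> {p. f p = 0}" by (simp add: W_def sw2)
    qed
    also have "\<dots> = sw ` ((\<lambda>t. (t, g t)) ` {a<..<b})" using W(8) by simp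
    also have "\<dots> = (\<lambda>t. (g t, t)) ` {a<..<b}" by (auto simp: sw_def image_iff)
    finally show ?thesis .
  qed
  have "p0 \<in> (\<lambda>t. (g t, t)) ` {a<..<b}" using p0W img assms(3) by blast
  moreover have "a < b" using W(4,5) by simp
  ultimately show ?thesis using Wo p0W WO img C1_curve_graph(2)[of a b g g'] W(6,7)
    by (intro exI[of _ W]) auto
qed

definition G1 :: "(real \<times> real \<Rightarrow> real) \<Rightarrow> real \<times> real \<Rightarrow> real" where "G1 u p = px u p - snd p"
definition G2 :: "(real \<times> real \<Rightarrow> real) \<Rightarrow> real \<times> real \<Rightarrow> real" where "G2 u p = py u p + fst p"

lemma sing_iff: "p \<in> sing_set \<Omega> u \<longleftrightarrow> p \<in> \<Omega> \<and> G1 u p = 0 \<and> G2 u p = 0"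
  by (simp add: sing_set_def G1_def G2_def)

lemma G_derivs:
  assumes "C2_on \<Omega> u" "r \<in> \<Omega>"
  shows "((\<lambda>t. G1 u (t, snd r)) has_real_derivative px (px u) r) (at (fst r))"
    "((\<lambda>t. G1 u (fst r, t)) has_real_derivative py (px u) r - 1) (at (snd r))"
    "((\<lambda>t. G2 u (t, snd r)) has_real_derivative px (py u) r + 1) (at (fst r))"
    "((\<lambda>t. G2 u (fst r, t)) has_real_derivative py (py u) r) (at (snd r))"
  using C2_D[OF assms] unfolding G1_def G2_def by (auto intro!: derivative_eq_intros)

lemma lin_G:
  assumes "open \<Omega>" "C2_on \<Omega> u" "p \<in> \<Omega>" "e > 0"
  shows "\<exists>\<delta>>0. ball p \<delta> \<subseteq> \<Omega> \<and> (\<forall>q\<in>ball p \<delta>. \<forall>q'\<in>ball p \<delta>.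
     \<bar>G1 u q - G1 u q' - px (px u) p * (fst q - fst q') - (py (px u) p - 1) * (snd q - snd q')\<bar>
        \<le> e * (\<bar>fst q - fst q'\<bar> + \<bar>snd q - snd q'\<bar>) \<and>
     \<bar>G2 u q - G2 u q' - (px (py u) p + 1) * (fst q - fst q') - py (py u) p * (snd q - snd q')\<bar>
        \<le> e * (\<bar>fst q - fst q'\<bar> + \<bar>snd q - snd q'\<bar>))"
proof -
  note C = C2_cont[OF assms(2)]
  have c1: "continuous_on \<Omega> (\<lambda>r. py (px u) r - 1)" "continuous_on \<Omega> (\<lambda>r. px (py u) r + 1)"
    using C by (auto intro!: continuous_intros)
  obtain d1 where d1: "d1 > 0" "ball p d1 \<subseteq> \<Omega>" and
    L1: "\<forall>q\<in>ball p d1. \<forall>q'\<in>ball p d1. \<bar>G1 u q - G1 u q' - px (px u) p * (fst q - fst q') - (py (px u) p - 1) * (snd q - snd q')\<bar>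
        \<le> e * (\<bar>fst q - fst q'\<bar> + \<bar>snd q - snd q'\<bar>)"
    using lin_from_partials[OF assms(1,3), of "G1 u" "px (px u)" "\<lambda>r. py (px u) r - 1" e]
      G_derivs[OF assms(2)] C c1 assms(4) by blast
  obtain d2 where d2: "d2 > 0" "ball p d2 \<subseteq> \<Omega>" and
    L2: "\<forall>q\<in>ball p d2. \<forall>q'\<in>ball p d2. \<bar>G2 u q - G2 u q' - (px (py u) p + 1) * (fst q - fst q') - py (py u) p * (snd q - snd q')\<bar>
        \<le> e * (\<bar>fst q - fst q'\<bar> + \<bar>snd q - snd q'\<bar>)"
    using lin_from_partials[OF assms(1,3), of "G2 u" "\<lambda>r. px (py u) r + 1" "py (py u)" e]
      G_derivs[OF assms(2)] C c1 assms(4) by blast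
  show ?thesis
    apply (rule exI[of _ "min d1 d2"])
    using d1 d2 L1 L2 by auto
qed

lemma abs_diff_le_dist: "\<bar>fst q - fst p\<bar> + \<bar>snd q - snd p\<bar> \<le> 2 * dist q p"
  using fst_le_dist[of q p] snd_le_dist[of q p] by linarith

lemma tri_abs: "\<bar>(x::real)*a - y*b\<bar> \<le> \<bar>x\<bar>*\<bar>a\<bar> + \<bar>y\<bar>*\<bar>b\<bar>"
  using abs_triangle_ineq4[of "x*a" "y*b"] by (simp add: abs_mult)

lemma partA:
  assumes "open \<Omega>" "C2_on \<Omega> u" "p0 \<in> sing_set \<Omega> u" "detU u p0 \<noteq> 0"
  shows "\<not> p0 islimpt sing_set \<Omega> u"
proof
  assume lim: "p0 islimpt sing_set \<Omega> u"
  have p0: "p0 \<in> \<Omega>" "G1 u p0 = 0" "G2 u p0 = 0" using assms(3) by (auto simp: sing_iff)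
  define m11 where "m11 = px (px u) p0"
  define m12 where "m12 = py (px u) p0 - 1"
  define m21 where "m21 = px (py u) p0 + 1"
  define m22 where "m22 = py (py u) p0"
  have sch: "px (py u) p0 = py (px u) p0" using schwarz[OF assms(1,2) p0(1)] .
  define D where "D = m11 * m22 - m12 * m21"
  have D: "D \<noteq> 0" using assms(4) sch by (simp add: D_def detU_def m11_def m12_def m21_def m22_def)
  define \<Sigma> where "\<Sigma> = \<bar>m11\<bar> + \<bar>m12\<bar> + \<bar>m21\<bar> + \<bar>m22\<bar>"
  have "m21 - m12 = 2" using sch by (simp add: m21_def m12_def)
  moreover have "\<bar>m21 - m12\<bar> \<le> \<bar>m21\<bar> + \<bar>m12\<bar>" by (rule abs_triangle_ineq4)
  ultimately have \<Sigma>: "\<Sigma> > 0" unfolding \<Sigma>_def by simp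
  define e where "e = \<bar>D\<bar> / (4 * \<Sigma>)"
  have e: "e > 0" using D \<Sigma> by (simp add: e_def)
  obtain \<delta> where \<delta>: "\<delta> > 0" "ball p0 \<delta> \<subseteq> \<Omega>" and
    L: "\<forall>q\<in>ball p0 \<delta>. \<forall>q'\<in>ball p0 \<delta>.
     \<bar>G1 u q - G1 u q' - px (px u) p0 * (fst q - fst q') - (py (px u) p0 - 1) * (snd q - snd q')\<bar>
        \<le> e * (\<bar>fst q - fst q'\<bar> + \<bar>snd q - snd q'\<bar>) \<and>
     \<bar>G2 u q - G2 u q' - (px (py u) p0 + 1) * (fst q - fst q') - py (py u) p0 * (snd q - snd q')\<bar>
        \<le> e * (\<bar>fst q - fst q'\<bar> + \<bar>snd q - snd q'\<bar>)"
    using lin_G[OF assms(1,2) p0(1) e] by blast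
  obtain q where q: "q \<in> sing_set \<Omega> u" "q \<noteq> p0" "dist q p0 < \<delta>"
    using lim \<delta>(1) unfolding islimpt_approachable by blast
  have qS: "G1 u q = 0" "G2 u q = 0" using q(1) by (auto simp: sing_iff)
  define v1 where "v1 = fst q - fst p0"
  define v2 where "v2 = snd q - snd p0"
  define N where "N = \<bar>v1\<bar> + \<bar>v2\<bar>"
  have qb: "q \<in> ball p0 \<delta>" "p0 \<in> ball p0 \<delta>" using q \<delta> by (auto simp: dist_commute)
  have Lq: "\<bar>G1 u q - G1 u p0 - px (px u) p0 * (fst q - fst p0) - (py (px u) p0 - 1) * (snd q - snd p0)\<bar>
        \<le> e * (\<bar>fst q - fst p0\<bar> + \<bar>snd q - snd p0\<bar>) \<and>
     \<bar>G2 u q - G2 u p0 - (px (py u) p0 + 1) * (fst q - fst p0) - py (py u) p0 * (snd q - snd p0)\<bar>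
        \<le> e * (\<bar>fst q - fst p0\<bar> + \<bar>snd q - snd p0\<bar>)" using L qb by blast
  have w1: "\<bar>m11 * v1 + m12 * v2\<bar> \<le> e * N"
  proof -
    have "m11 * v1 + m12 * v2 = - (G1 u q - G1 u p0 - px (px u) p0 * (fst q - fst p0) - (py (px u) p0 - 1) * (snd q - snd p0))"
      using qS p0 by (simp add: m11_def m12_def v1_def v2_def)
    then have "\<bar>m11 * v1 + m12 * v2\<bar> = \<bar>G1 u q - G1 u p0 - px (px u) p0 * (fst q - fst p0) - (py (px u) p0 - 1) * (snd q - snd p0)\<bar>"
      by (simp only: abs_minus_cancel)
    then show ?thesis using Lq unfolding N_def v1_def v2_def by linarith
  qed
  have w2: "\<bar>m21 * v1 + m22 * v2\<bar> \<le> e * N"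
  proof -
    have "m21 * v1 + m22 * v2 = - (G2 u q - G2 u p0 - (px (py u) p0 + 1) * (fst q - fst p0) - py (py u) p0 * (snd q - snd p0))"
      using qS p0 by (simp add: m21_def m22_def v1_def v2_def)
    then have "\<bar>m21 * v1 + m22 * v2\<bar> = \<bar>G2 u q - G2 u p0 - (px (py u) p0 + 1) * (fst q - fst p0) - py (py u) p0 * (snd q - snd p0)\<bar>"
      by (simp only: abs_minus_cancel)
    then show ?thesis using Lq unfolding N_def v1_def v2_def by linarith
  qed
  have "D * v1 = m22 * (m11 * v1 + m12 * v2) - m12 * (m21 * v1 + m22 * v2)" by (simp add: D_def algebra_simps)
  then have "\<bar>D\<bar> * \<bar>v1\<bar> \<le> \<bar>m22\<bar> * \<bar>m11 * v1 + m12 * v2\<bar> + \<bar>m12\<bar> * \<bar>m21 * v1 + m22 * v2\<bar>"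
    using tri_abs[of m22 "m11 * v1 + m12 * v2" m12 "m21 * v1 + m22 * v2"] by (simp add: abs_mult[symmetric])
  also have "\<dots> \<le> \<bar>m22\<bar> * (e * N) + \<bar>m12\<bar> * (e * N)"
    using w1 w2 by (intro add_mono mult_left_mono) auto
  finally have A1: "\<bar>D\<bar> * \<bar>v1\<bar> \<le> (\<bar>m22\<bar> + \<bar>m12\<bar>) * (e * N)" by (simp add: algebra_simps)
  have "D * v2 = m11 * (m21 * v1 + m22 * v2) - m21 * (m11 * v1 + m12 * v2)" by (simp add: D_def algebra_simps)
  then have "\<bar>D\<bar> * \<bar>v2\<bar> \<le> \<bar>m11\<bar> * \<bar>m21 * v1 + m22 * v2\<bar> + \<bar>m21\<bar> * \<bar>m11 * v1 + m12 * v2\<bar>"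
    using tri_abs[of m11 "m21 * v1 + m22 * v2" m21 "m11 * v1 + m12 * v2"] by (simp add: abs_mult[symmetric])
  also have "\<dots> \<le> \<bar>m11\<bar> * (e * N) + \<bar>m21\<bar> * (e * N)"
    using w1 w2 by (intro add_mono mult_left_mono) auto
  finally have A2: "\<bar>D\<bar> * \<bar>v2\<bar> \<le> (\<bar>m11\<bar> + \<bar>m21\<bar>) * (e * N)" by (simp add: algebra_simps)
  have "\<bar>D\<bar> * N \<le> \<Sigma> * (e * N)" using A1 A2 unfolding N_def \<Sigma>_def by (simp add: algebra_simps)
  also have "\<dots> = \<bar>D\<bar> * N / 4" using \<Sigma> by (simp add: e_def)
  finally have "\<bar>D\<bar> * N \<le> \<bar>D\<bar> * N / 4" .
  moreover have "\<bar>D\<bar> * N \<ge> 0" by (simp add: N_def)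
  ultimately have "\<bar>D\<bar> * N \<le> 0" by linarith
  then have "N \<le> 0" using D by (simp add: mult_le_0_iff)
  then have "v1 = 0" "v2 = 0" by (auto simp: N_def)
  then have "q = p0" by (simp add: v1_def v2_def prod_eq_iff)
  then show False using q(2) by simp
qed

lemma partB:
  assumes "open W" "p0 \<in> W" "C1_curve \<gamma> a b" "p0 \<in> \<gamma> ` {a<..<b}" "W \<inter> S = \<gamma> ` {a<..<b}"
  shows "p0 islimpt S"
  unfolding islimpt_approachable
proof (intro allI impI)
  fix \<epsilon> :: real assume \<epsilon>: "\<epsilon> > 0"
  obtain t0 where t0: "t0 \<in> {a<..<b}" "p0 = \<gamma> t0" using assms(4) by auto
  have cont: "continuous_on {a<..<b} \<gamma>" and inj: "inj_on \<gamma> {a<..<b}"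
    using assms(3) C1_differentiable_imp_continuous_on unfolding C1_curve_def by auto
  have "isCont \<gamma> t0" using cont t0(1) continuous_on_eq_continuous_at[of "{a<..<b}" \<gamma>] by auto
  then obtain d where d: "d > 0" "\<And>t. dist t t0 < d \<Longrightarrow> dist (\<gamma> t) (\<gamma> t0) < \<epsilon>"
    using \<epsilon> unfolding continuous_at_eps_delta by blast
  obtain \<mu> where mm: "\<mu> > 0" "\<mu> \<le> b - t0" "\<mu> \<le> d" using t0 d by (intro that[of "min d (b - t0)"]) auto
  define t where "t = t0 + \<mu> / 2"
  have t: "t \<in> {a<..<b}" "t \<noteq> t0" "dist t t0 < d" using t0 d mm unfolding t_def dist_real_def by auto
  have "\<gamma> t \<noteq> p0" using inj t t0 by (auto simp: inj_on_def)
  moreover have "\<gamma> t \<in> S" using assms(5) t(1) by blast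
  moreover have "dist (\<gamma> t) p0 < \<epsilon>" using d(2)[OF t(3)] t0 by simp
  ultimately show "\<exists>x'\<in>S. x' \<noteq> p0 \<and> dist x' p0 < \<epsilon>" by blast
qed

lemma five:
  fixes t e1 e2 :: real
  assumes "\<bar>e1\<bar> \<le> \<bar>t\<bar>/10" "\<bar>e2\<bar> \<le> \<bar>t\<bar>/10"
  shows "(t+e1)^2 + (t+e2)^2 \<le> 5*((t+e1)*(t+e2))"
proof -
  have a: "\<bar>e1*e2\<bar> \<le> t^2/100" using assms mult_mono[of "\<bar>e1\<bar>" "\<bar>t\<bar>/10" "\<bar>e2\<bar>" "\<bar>t\<bar>/10"]
    by (simp add: abs_mult power2_eq_square)
  have b: "e1^2 \<le> t^2/100" using assms mult_mono[of "\<bar>e1\<bar>" "\<bar>t\<bar>/10" "\<bar>e1\<bar>" "\<bar>t\<bar>/10"]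
    by (simp add: abs_mult power2_eq_square)
  have c: "e2^2 \<le> t^2/100" using assms mult_mono[of "\<bar>e2\<bar>" "\<bar>t\<bar>/10" "\<bar>e2\<bar>" "\<bar>t\<bar>/10"]
    by (simp add: abs_mult power2_eq_square)
  have d: "\<bar>t*(e1+e2)\<bar> \<le> t^2/5"
  proof -
    have "\<bar>e1+e2\<bar> \<le> \<bar>t\<bar>/5" using assms by linarith
    then have "\<bar>t\<bar>*\<bar>e1+e2\<bar> \<le> \<bar>t\<bar>*(\<bar>t\<bar>/5)" by (intro mult_left_mono) auto
    then show ?thesis by (simp add: abs_mult power2_eq_square)
  qed
  have "(t+e1)^2 + (t+e2)^2 - 5*((t+e1)*(t+e2)) = -3*t^2 - 3*(t*(e1+e2)) - 5*(e1*e2) + e1^2 + e2^2"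
    by (simp add: algebra_simps power2_eq_square)
  moreover have "t^2 \<ge> 0" by simp
  ultimately show ?thesis using a b c d by (simp add: abs_le_iff)
qed

lemma err_bound:
  fixes D11 D2 D22 X1 X2 e :: real
  assumes "\<bar>D11\<bar> \<le> e" "\<bar>D2\<bar> \<le> e" "\<bar>D22\<bar> \<le> e"
  shows "\<bar>D11 * X2^2 - X1*X2*D2 + D22*X1^2\<bar> \<le> e*(3/2)*(X1^2+X2^2)"
proof -
  have e: "e \<ge> 0" using assms(1) by linarith
  have "\<bar>D11 * X2^2 - X1*X2*D2 + D22*X1^2\<bar> \<le> \<bar>D11\<bar> * X2^2 + \<bar>X1*X2\<bar>*\<bar>D2\<bar> + \<bar>D22\<bar>*X1^2"
  proof -
    have "\<bar>D11 * X2^2 - X1*X2*D2 + D22*X1^2\<bar> \<le> \<bar>D11 * X2^2\<bar> + \<bar>X1*X2*D2\<bar> + \<bar>D22*X1^2\<bar>"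
      using abs_triangle_ineq[of "D11*X2^2 - X1*X2*D2" "D22*X1^2"] abs_triangle_ineq4[of "D11*X2^2" "X1*X2*D2"] by linarith
    also have "\<dots> = \<bar>D11\<bar> * X2^2 + \<bar>X1*X2\<bar>*\<bar>D2\<bar> + \<bar>D22\<bar>*X1^2" by (simp add: abs_mult)
    finally show ?thesis .
  qed
  also have "\<dots> \<le> e * X2^2 + \<bar>X1*X2\<bar>*e + e*X1^2"
    using assms by (intro add_mono mult_right_mono mult_left_mono) auto
  also have "\<bar>X1*X2\<bar> \<le> (X1^2+X2^2)/2"
  proof -
    have "0 \<le> (\<bar>X1\<bar> - \<bar>X2\<bar>)^2" by simp
    then show ?thesis by (simp add: abs_mult power2_eq_square algebra_simps)
  qed
  then have "e * X2^2 + \<bar>X1*X2\<bar>*e + e*X1^2 \<le> e * X2^2 + ((X1^2+X2^2)/2)*e + e*X1^2"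
    using e by (intro add_mono mult_right_mono) auto
  finally have "\<bar>D11 * X2^2 - X1*X2*D2 + D22*X1^2\<bar> \<le> e * X2^2 + ((X1^2+X2^2)/2)*e + e*X1^2" .
  moreover have "e * X2^2 + ((X1^2+X2^2)/2)*e + e*X1^2 = e*(3/2)*(X1^2+X2^2)" by (simp add: field_simps)
  ultimately show ?thesis by linarith
qed

lemma sqrt_le_abs_sum: "sqrt (x^2 + y^2) \<le> \<bar>x\<bar> + \<bar>y::real\<bar>"
proof -
  have "(\<bar>x\<bar> + \<bar>y\<bar>)^2 = x^2 + y^2 + 2*\<bar>x\<bar>*\<bar>y\<bar>" by (simp add: power2_sum)
  moreover have "\<bar>x\<bar>*\<bar>y\<bar> \<ge> 0" by simp
  ultimately have "x^2 + y^2 \<le> (\<bar>x\<bar> + \<bar>y\<bar>)^2" by linarith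
  then have "sqrt (x^2 + y^2) \<le> sqrt ((\<bar>x\<bar> + \<bar>y\<bar>)^2)" by (rule real_sqrt_le_mono)
  then show ?thesis by simp
qed

lemma cont_ball:
  assumes "continuous_on \<Omega> f" "open \<Omega>" "p \<in> \<Omega>" "e > 0"
  shows "\<exists>d>0. \<forall>q\<in>ball p d. q \<in> \<Omega> \<and> \<bar>f q - f p\<bar> \<le> (e::real)"
proof -
  obtain d1 where d1: "d1 > 0" "ball p d1 \<subseteq> \<Omega>" using assms(2,3) open_contains_ball by blast
  obtain d2 where d2: "d2 > 0" "\<forall>r\<in>\<Omega>. dist r p < d2 \<longrightarrow> dist (f r) (f p) < e"
    using assms(1,3,4) unfolding continuous_on_iff by blast
  show ?thesis
  proof (intro exI[of _ "min d1 d2"] conjI ballI)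
    show "min d1 d2 > 0" using d1 d2 by simp
    fix q assume q: "q \<in> ball p (min d1 d2)"
    then show "q \<in> \<Omega>" using d1 by auto
    then show "\<bar>f q - f p\<bar> \<le> e" using d2 q by (auto simp: dist_real_def dist_commute less_imp_le)
  qed
qed

lemma recon_bound:
  fixes b1 b2 X1 X2 :: real
  assumes "b1\<^sup>2 + b2\<^sup>2 > 0"
  shows "(b1\<^sup>2 + b2\<^sup>2) * (\<bar>X1\<bar> + \<bar>X2\<bar>) \<le> 2 * (\<bar>b1\<bar> + \<bar>b2\<bar>) * (\<bar>- b2 * X1 + b1 * X2\<bar> + \<bar>b1 * X1 + b2 * X2\<bar>)"
proof -
  define A where "A = - b2 * X1 + b1 * X2"
  define B where "B = b1 * X1 + b2 * X2"
  have e1: "(b1\<^sup>2 + b2\<^sup>2) * X1 = - b2 * A + b1 * B" by (simp add: A_def B_def algebra_simps power2_eq_square)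
  have e2: "(b1\<^sup>2 + b2\<^sup>2) * X2 = b1 * A + b2 * B" by (simp add: A_def B_def algebra_simps power2_eq_square)
  have "(b1\<^sup>2 + b2\<^sup>2) * \<bar>X1\<bar> \<le> \<bar>b2\<bar> * \<bar>A\<bar> + \<bar>b1\<bar> * \<bar>B\<bar>"
  proof -
    have "(b1\<^sup>2 + b2\<^sup>2) * \<bar>X1\<bar> = \<bar>- b2 * A + b1 * B\<bar>" using assms e1[symmetric] by (simp add: abs_mult)
    also have "\<dots> \<le> \<bar>b2\<bar> * \<bar>A\<bar> + \<bar>b1\<bar> * \<bar>B\<bar>" using abs_triangle_ineq[of "- b2 * A" "b1 * B"] by (simp add: abs_mult)
    finally show ?thesis .
  qed
  moreover have "(b1\<^sup>2 + b2\<^sup>2) * \<bar>X2\<bar> \<le> \<bar>b1\<bar> * \<bar>A\<bar> + \<bar>b2\<bar> * \<bar>B\<bar>"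
  proof -
    have "(b1\<^sup>2 + b2\<^sup>2) * \<bar>X2\<bar> = \<bar>b1 * A + b2 * B\<bar>" using assms e2[symmetric] by (simp add: abs_mult)
    also have "\<dots> \<le> \<bar>b1\<bar> * \<bar>A\<bar> + \<bar>b2\<bar> * \<bar>B\<bar>" using abs_triangle_ineq[of "b1 * A" "b2 * B"] by (simp add: abs_mult)
    finally show ?thesis .
  qed
  moreover have "\<bar>b2\<bar> * \<bar>A\<bar> + \<bar>b1\<bar> * \<bar>B\<bar> + (\<bar>b1\<bar> * \<bar>A\<bar> + \<bar>b2\<bar> * \<bar>B\<bar>)
     \<le> 2 * (\<bar>b1\<bar> + \<bar>b2\<bar>) * (\<bar>A\<bar> + \<bar>B\<bar>)"
    by (simp add: algebra_simps)
  ultimately have "(b1\<^sup>2 + b2\<^sup>2) * \<bar>X1\<bar> + (b1\<^sup>2 + b2\<^sup>2) * \<bar>X2\<bar> \<le> 2 * (\<bar>b1\<bar> + \<bar>b2\<bar>) * (\<bar>A\<bar> + \<bar>B\<bar>)"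
    by linarith
  then show ?thesis unfolding A_def B_def by (simp add: distrib_left)
qed

lemma partC:
  assumes oO: "open \<Omega>" and C2: "C2_on \<Omega> u" and p0S: "p0 \<in> sing_set \<Omega> u"
    and Hb: "\<exists>C>0. \<exists>e>0. \<forall>p\<in>ball p0 e \<inter> \<Omega>. p \<notin> sing_set \<Omega> u \<longrightarrow> \<bar>Hcurv u p\<bar> \<le> C / dist p p0"
    and det: "detU u p0 = 0"
  shows "\<exists>W. open W \<and> p0 \<in> W \<and> W \<subseteq> \<Omega> \<and>
           (\<exists>\<gamma> a b. C1_curve \<gamma> a b \<and> p0 \<in> \<gamma> ` {a<..<b} \<and> W \<inter> sing_set \<Omega> u = \<gamma> ` {a<..<b})"
proof -
  obtain C eH where C: "C > 0" "eH > 0" and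
    HB: "\<And>p. p \<in> ball p0 eH \<Longrightarrow> p \<in> \<Omega> \<Longrightarrow> p \<notin> sing_set \<Omega> u \<Longrightarrow> \<bar>Hcurv u p\<bar> \<le> C / dist p p0"
    using Hb by blast
  have p0: "p0 \<in> \<Omega>" "G1 u p0 = 0" "G2 u p0 = 0" using p0S by (auto simp: sing_iff)
  define m11 where "m11 = px (px u) p0"
  define m12 where "m12 = py (px u) p0 - 1"
  define m21 where "m21 = px (py u) p0 + 1"
  define m22 where "m22 = py (py u) p0"
  have sch: "px (py u) p0 = py (px u) p0" using schwarz[OF oO C2 p0(1)] .
  have d0: "m11 * m22 - m12 * m21 = 0" using det sch by (simp add: detU_def m11_def m12_def m21_def m22_def)
  have m2112: "m21 - m12 = 2" using sch by (simp add: m21_def m12_def)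
  obtain b1 b2 where bk1: "b1 * m11 + b2 * m21 = 0" and bk2: "b1 * m12 + b2 * m22 = 0"
    and bnz: "b1\<^sup>2 + b2\<^sup>2 > 0"
  proof (cases "m21 = 0 \<and> m11 = 0")
    case True
    then have "m12 \<noteq> 0" using m2112 by simp
    then have pos: "m22\<^sup>2 + (- m12)\<^sup>2 > 0" by (simp add: add_nonneg_pos)
    show ?thesis using True d0 pos by (intro that[of m22 "- m12"]) (auto simp: algebra_simps)
  next
    case False
    then have "m21\<^sup>2 + (- m11)\<^sup>2 > 0" by (auto simp: add_pos_nonneg add_nonneg_pos)
    then show ?thesis using d0 by (intro that[of m21 "- m11"]) (auto simp: algebra_simps)
  qed
  define a1 where "a1 = - b2"
  define a2 where "a2 = b1"
  define \<beta> where "\<beta> = b1\<^sup>2 + b2\<^sup>2"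
  have \<beta>: "\<beta> > 0" using bnz by (simp add: \<beta>_def)
  define w1 where "w1 = a1 * m11 + a2 * m21"
  define w2 where "w2 = a1 * m12 + a2 * m22"
  have wnz: "w1\<^sup>2 + w2\<^sup>2 > 0"
  proof (rule ccontr)
    assume "\<not> w1\<^sup>2 + w2\<^sup>2 > 0"
    then have "w1\<^sup>2 + w2\<^sup>2 \<le> 0" by simp
    then have w0: "w1 = 0" "w2 = 0" by (simp_all add: sum_power2_le_zero_iff)
    have "\<beta> * m21 = b2 * (b1 * m11 + b2 * m21) + b1 * w1"
      by (simp add: \<beta>_def w1_def a1_def a2_def algebra_simps power2_eq_square)
    then have "m21 = 0" using bk1 w0 \<beta> by simp
    have "\<beta> * m12 = b1 * (b1 * m12 + b2 * m22) - b2 * w2"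
      by (simp add: \<beta>_def w2_def a1_def a2_def algebra_simps power2_eq_square)
    then have "m12 = 0" using bk2 w0 \<beta> by simp
    then show False using \<open>m21 = 0\<close> m2112 by simp
  qed
  define \<kappa>a where "\<kappa>a = w1 * a1 + w2 * a2"
  define \<kappa>b where "\<kappa>b = w1 * b1 + w2 * b2"
  have kap: "\<kappa>a \<noteq> 0 \<or> \<kappa>b \<noteq> 0"
  proof (rule ccontr)
    assume "\<not> (\<kappa>a \<noteq> 0 \<or> \<kappa>b \<noteq> 0)"
    then have k0: "\<kappa>a = 0" "\<kappa>b = 0" by auto
    have "\<beta> * w1 = a1 * \<kappa>a + b1 * \<kappa>b" by (simp add: \<beta>_def \<kappa>a_def \<kappa>b_def a1_def a2_def algebra_simps power2_eq_square)
    moreover have "\<beta> * w2 = a2 * \<kappa>a + b2 * \<kappa>b" by (simp add: \<beta>_def \<kappa>a_def \<kappa>b_def a1_def a2_def algebra_simps power2_eq_square)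
    ultimately have "w1 = 0" "w2 = 0" using k0 \<beta> by auto
    then show False using wnz by simp
  qed
  define Q0 where "Q0 X1 X2 = m11 * X2\<^sup>2 - X1 * X2 * (m21 + m12) + m22 * X1\<^sup>2" for X1 X2
  have ident: "\<beta>\<^sup>2 * Q0 X1 X2 = - (b1 * X1 + b2 * X2) * ((a1 * X1 + a2 * X2) * \<kappa>b - (b1 * X1 + b2 * X2) * \<kappa>a)" for X1 X2
    unfolding Q0_def \<beta>_def \<kappa>a_def \<kappa>b_def w1_def w2_def a1_def a2_def using bk1 bk2 by algebra
  have lagr: "(a1 * X1 + a2 * X2)\<^sup>2 + (b1 * X1 + b2 * X2)\<^sup>2 = \<beta> * (X1\<^sup>2 + X2\<^sup>2)" for X1 X2
    by (simp add: a1_def a2_def \<beta>_def algebra_simps power2_eq_square)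
  define Bb where "Bb = \<bar>b1\<bar> + \<bar>b2\<bar>"
  have Bb: "Bb > 0"
  proof (rule ccontr)
    assume "\<not> Bb > 0"
    then have "b1 = 0" "b2 = 0" by (auto simp: Bb_def)
    then show False using bnz by simp
  qed
  define \<Lambda> where "\<Lambda> = 2 * Bb / \<beta>"
  have \<Lambda>: "\<Lambda> > 0" using Bb \<beta> by (simp add: \<Lambda>_def)
  have reconb: "\<bar>X1\<bar> + \<bar>X2\<bar> \<le> \<Lambda> * (\<bar>a1 * X1 + a2 * X2\<bar> + \<bar>b1 * X1 + b2 * X2\<bar>)" for X1 X2
  proof -
    have "\<beta> * (\<bar>X1\<bar> + \<bar>X2\<bar>) \<le> 2 * Bb * (\<bar>a1 * X1 + a2 * X2\<bar> + \<bar>b1 * X1 + b2 * X2\<bar>)"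
      using recon_bound[OF bnz, of X1 X2] by (simp add: \<beta>_def Bb_def a1_def a2_def)
    then show ?thesis using \<beta> by (simp add: \<Lambda>_def field_simps)
  qed
  define c0 where "c0 = (if \<kappa>a \<noteq> 0 then \<bar>\<kappa>a\<bar> / \<beta> else \<bar>\<kappa>b\<bar> / (5 * \<beta>))"
  have c0: "c0 > 0" using kap \<beta> by (auto simp: c0_def)
  note CC = C2_cont[OF C2]
  obtain \<rho>1 where \<rho>1: "\<rho>1 > 0" "\<forall>q\<in>ball p0 \<rho>1. q \<in> \<Omega> \<and> \<bar>px (px u) q - px (px u) p0\<bar> \<le> c0/4"
    using cont_ball[OF CC(4) oO p0(1), of "c0/4"] c0 by auto
  obtain \<rho>2 where \<rho>2: "\<rho>2 > 0" "\<forall>q\<in>ball p0 \<rho>2. q \<in> \<Omega> \<and> \<bar>py (px u) q - py (px u) p0\<bar> \<le> c0/8"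
    using cont_ball[OF CC(5) oO p0(1), of "c0/8"] c0 by auto
  obtain \<rho>3 where \<rho>3: "\<rho>3 > 0" "\<forall>q\<in>ball p0 \<rho>3. q \<in> \<Omega> \<and> \<bar>px (py u) q - px (py u) p0\<bar> \<le> c0/8"
    using cont_ball[OF CC(6) oO p0(1), of "c0/8"] c0 by auto
  obtain \<rho>4 where \<rho>4: "\<rho>4 > 0" "\<forall>q\<in>ball p0 \<rho>4. q \<in> \<Omega> \<and> \<bar>py (py u) q - py (py u) p0\<bar> \<le> c0/4"
    using cont_ball[OF CC(7) oO p0(1), of "c0/4"] c0 by auto
  define \<rho> where "\<rho> = min (min (min \<rho>1 \<rho>2) (min \<rho>3 \<rho>4)) eH"
  have \<rho>: "\<rho> > 0" using \<rho>1 \<rho>2 \<rho>3 \<rho>4 C by (simp add: \<rho>_def)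
  have nb: "q \<in> \<Omega> \<and> \<bar>px (px u) q - px (px u) p0\<bar> \<le> c0/4 \<and> \<bar>py (px u) q - py (px u) p0\<bar> \<le> c0/8 \<and>
     \<bar>px (py u) q - px (py u) p0\<bar> \<le> c0/8 \<and> \<bar>py (py u) q - py (py u) p0\<bar> \<le> c0/4 \<and> q \<in> ball p0 eH"
    if "q \<in> ball p0 \<rho>" for q
    using that \<rho>1(2) \<rho>2(2) \<rho>3(2) \<rho>4(2) by (auto simp: \<rho>_def)
  have key: "c0/2 * dist p p0 \<le> C * (\<bar>G1 u p\<bar> + \<bar>G2 u p\<bar>)"
    if pb: "p \<in> ball p0 \<rho>" and pnz: "G1 u p \<noteq> 0 \<or> G2 u p \<noteq> 0"
      and pQ: "\<bar>Q0 (G1 u p) (G2 u p)\<bar> \<ge> c0 * ((G1 u p)\<^sup>2 + (G2 u p)\<^sup>2)" for p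
  proof -
    define X1 where "X1 = G1 u p"
    define X2 where "X2 = G2 u p"
    define N2 where "N2 = X1\<^sup>2 + X2\<^sup>2"
    have N2: "N2 > 0" using pnz by (auto simp: N2_def X1_def X2_def add_pos_nonneg add_nonneg_pos)
    define n where "n = sqrt N2"
    have n: "n > 0" "n\<^sup>2 = N2" using N2 by (auto simp: n_def)
    note nbp = nb[OF pb]
    have pO: "p \<in> \<Omega>" using nbp by simp
    have pnS: "p \<notin> sing_set \<Omega> u" using pnz by (simp add: sing_iff)
    have pne: "p \<noteq> p0" using pnz p0 by auto
    define d where "d = dist p p0"
    have d: "d > 0" using pne by (simp add: d_def)
    define Qp where "Qp = px (px u) p * X2\<^sup>2 - X1 * X2 * ((px (py u) p + 1) + (py (px u) p - 1)) + py (py u) p * X1\<^sup>2"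
    have Hf: "Hcurv u p = Qp / n^3"
    proof -
      have pos: "(px u p - snd p)\<^sup>2 + (py u p + fst p)\<^sup>2 > 0" using N2 by (simp add: N2_def X1_def X2_def G1_def G2_def)
      show ?thesis using H_formula[OF C2 pO pos] by (simp add: Qp_def n_def N2_def X1_def X2_def G1_def G2_def)
    qed
    have "Qp - Q0 X1 X2 = (px (px u) p - m11) * X2\<^sup>2 - X1 * X2 * ((px (py u) p + py (px u) p) - (px (py u) p0 + py (px u) p0))
        + (py (py u) p - m22) * X1\<^sup>2"
      by (simp add: Qp_def Q0_def m11_def m12_def m21_def m22_def algebra_simps)
    moreover have "\<bar>(px (px u) p - m11) * X2\<^sup>2 - X1 * X2 * ((px (py u) p + py (px u) p) - (px (py u) p0 + py (px u) p0))
        + (py (py u) p - m22) * X1\<^sup>2\<bar> \<le> c0/4 * (3/2) * N2"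
      unfolding N2_def
    proof (rule err_bound)
      show "\<bar>px (px u) p - m11\<bar> \<le> c0/4" "\<bar>py (py u) p - m22\<bar> \<le> c0/4" using nbp by (auto simp: m11_def m22_def)
      show "\<bar>(px (py u) p + py (px u) p) - (px (py u) p0 + py (px u) p0)\<bar> \<le> c0/4" using nbp by linarith
    qed
    ultimately have "\<bar>Qp - Q0 X1 X2\<bar> \<le> c0/4 * (3/2) * N2" by simp
    moreover have "\<bar>Q0 X1 X2\<bar> \<ge> c0 * N2" using pQ by (simp add: X1_def X2_def N2_def)
    moreover have "\<bar>Q0 X1 X2\<bar> - \<bar>Qp\<bar> \<le> \<bar>Qp - Q0 X1 X2\<bar>"
      by (metis abs_minus_commute abs_triangle_ineq2)
    moreover have "c0/4 * (3/2) * N2 = (3/8) * (c0 * N2)" "c0/2 * N2 = (1/2) * (c0 * N2)" by simp_all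
    moreover have "c0 * N2 > 0" using c0 N2 by simp
    ultimately have Qb: "\<bar>Qp\<bar> \<ge> c0/2 * N2" by linarith
    have Hle: "\<bar>Hcurv u p\<bar> \<le> C / d" using HB[OF _ pO pnS] nbp by (simp add: d_def)
    have "\<bar>Qp\<bar> = \<bar>Hcurv u p\<bar> * n^3" using Hf n by (simp add: abs_divide)
    also have "\<dots> \<le> C / d * n^3" using Hle n by (intro mult_right_mono) auto
    finally have "c0/2 * N2 \<le> C / d * n^3" using Qb by linarith
    then have "c0/2 * N2 * d \<le> C * n^3" using d by (simp add: field_simps)
    also have "C * n^3 = (C * n) * N2" using n by (simp add: power3_eq_cube power2_eq_square)
    finally have "(c0/2 * d) * N2 \<le> (C * n) * N2" by (simp add: algebra_simps)
    then have "c0/2 * d \<le> C * n" using N2 by simp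
    also have "C * n \<le> C * (\<bar>X1\<bar> + \<bar>X2\<bar>)" using sqrt_le_abs_sum[of X1 X2] C by (simp add: n_def N2_def)
    finally show ?thesis by (simp add: d_def X1_def X2_def)
  qed
  define \<omega> where "\<omega> = w1\<^sup>2 + w2\<^sup>2"
  define Wn where "Wn = \<bar>w1\<bar> + \<bar>w2\<bar>"
  have \<omega>: "\<omega> > 0" using wnz by (simp add: \<omega>_def)
  have Wn: "Wn > 0"
  proof (rule ccontr)
    assume "\<not> Wn > 0"
    then have "w1 = 0" "w2 = 0" by (auto simp: Wn_def)
    then show False using wnz by simp
  qed
  define eL where "eL = min (\<omega> / (10 * Bb * Wn)) (c0 / (20 * C * \<Lambda> * Bb))"
  have eL: "eL > 0" using \<omega> Bb Wn c0 C \<Lambda> by (simp add: eL_def)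
  have K0: "C * \<Lambda> * Bb * eL \<le> c0 / 20"
  proof -
    have "eL \<le> c0 / (20 * C * \<Lambda> * Bb)" by (simp add: eL_def)
    then have "(C * \<Lambda> * Bb) * eL \<le> (C * \<Lambda> * Bb) * (c0 / (20 * C * \<Lambda> * Bb))"
      using C \<Lambda> Bb by (intro mult_left_mono) auto
    also have "\<dots> = c0 / 20" using C \<Lambda> Bb by (simp add: field_simps)
    finally show ?thesis .
  qed
  have K1: "Bb * eL * Wn / \<omega> \<le> 1/10"
  proof -
    have "eL \<le> \<omega> / (10 * Bb * Wn)" by (simp add: eL_def)
    then have "(Bb * Wn) * eL \<le> (Bb * Wn) * (\<omega> / (10 * Bb * Wn))"
      using Wn Bb by (intro mult_left_mono) auto
    also have "\<dots> = \<omega> / 10" using Wn Bb by (simp add: field_simps)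
    finally show ?thesis using \<omega> by (simp add: field_simps)
  qed
  obtain \<delta> where \<delta>: "\<delta> > 0" "ball p0 \<delta> \<subseteq> \<Omega>" and
    L: "\<forall>q\<in>ball p0 \<delta>. \<forall>q'\<in>ball p0 \<delta>.
     \<bar>G1 u q - G1 u q' - px (px u) p0 * (fst q - fst q') - (py (px u) p0 - 1) * (snd q - snd q')\<bar>
        \<le> eL * (\<bar>fst q - fst q'\<bar> + \<bar>snd q - snd q'\<bar>) \<and>
     \<bar>G2 u q - G2 u q' - (px (py u) p0 + 1) * (fst q - fst q') - py (py u) p0 * (snd q - snd q')\<bar>
        \<le> eL * (\<bar>fst q - fst q'\<bar> + \<bar>snd q - snd q'\<bar>)"
    using lin_G[OF oO C2 p0(1) eL] by blast
  define G where "G p = a1 * G1 u p + a2 * G2 u p" for p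
  define h where "h p = b1 * G1 u p + b2 * G2 u p" for p
  have Gp0: "G p0 = 0" and hp0: "h p0 = 0" using p0 by (simp_all add: G_def h_def)
  have lin2: "\<bar>h q - h q'\<bar> \<le> Bb * eL * (\<bar>fst q - fst q'\<bar> + \<bar>snd q - snd q'\<bar>) \<and>
      \<bar>G q - G q' - w1 * (fst q - fst q') - w2 * (snd q - snd q')\<bar> \<le> Bb * eL * (\<bar>fst q - fst q'\<bar> + \<bar>snd q - snd q'\<bar>)"
    if "q \<in> ball p0 \<delta>" "q' \<in> ball p0 \<delta>" for q q'
  proof -
    define N where "N = \<bar>fst q - fst q'\<bar> + \<bar>snd q - snd q'\<bar>"
    define E1 where "E1 = G1 u q - G1 u q' - m11 * (fst q - fst q') - m12 * (snd q - snd q')"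
    define E2 where "E2 = G2 u q - G2 u q' - m21 * (fst q - fst q') - m22 * (snd q - snd q')"
    have E: "\<bar>E1\<bar> \<le> eL * N" "\<bar>E2\<bar> \<le> eL * N"
      using L that unfolding E1_def E2_def N_def m11_def m12_def m21_def m22_def by blast+
    have "h q - h q' = b1 * E1 + b2 * E2 + (b1 * m11 + b2 * m21) * (fst q - fst q') + (b1 * m12 + b2 * m22) * (snd q - snd q')"
      by (simp add: h_def E1_def E2_def algebra_simps)
    then have hE: "h q - h q' = b1 * E1 + b2 * E2" using bk1 bk2 by simp
    have "G q - G q' - w1 * (fst q - fst q') - w2 * (snd q - snd q') = a1 * E1 + a2 * E2"
      by (simp add: G_def E1_def E2_def w1_def w2_def algebra_simps)
    note Geq = this
    have B: "\<bar>x1 * E1 + x2 * E2\<bar> \<le> (\<bar>x1\<bar> + \<bar>x2\<bar>) * (eL * N)" for x1 x2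
    proof -
      have "\<bar>x1 * E1 + x2 * E2\<bar> \<le> \<bar>x1\<bar> * \<bar>E1\<bar> + \<bar>x2\<bar> * \<bar>E2\<bar>"
        using abs_triangle_ineq[of "x1 * E1" "x2 * E2"] by (simp add: abs_mult)
      also have "\<dots> \<le> \<bar>x1\<bar> * (eL * N) + \<bar>x2\<bar> * (eL * N)" using E by (intro add_mono mult_left_mono) auto
      finally show ?thesis by (simp add: algebra_simps)
    qed
    have hb: "\<bar>h q - h q'\<bar> \<le> Bb * eL * N" using hE B[of b1 b2] by (simp add: Bb_def mult.assoc)
    have Gb: "\<bar>G q - G q' - w1 * (fst q - fst q') - w2 * (snd q - snd q')\<bar> \<le> Bb * eL * N"
      using Geq B[of a1 a2] by (simp add: Bb_def a1_def a2_def mult.assoc add.commute)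
    show ?thesis using hb Gb unfolding N_def by blast
  qed
  define R where "R = min \<rho> \<delta> / 2"
  have R: "R > 0" using \<rho> \<delta> by (simp add: R_def)
  have claim: "h q = 0" if qR: "q \<in> ball p0 R" and Gq: "G q = 0" for q
  proof (rule ccontr)
    assume hq: "h q \<noteq> 0"
    define h0 where "h0 = h q"
    define dq where "dq = dist q p0"
    have qne: "q \<noteq> p0" using hq hp0 by auto
    have dq: "dq > 0" using qne by (simp add: dq_def)
    have dqR: "dq < R" using qR by (simp add: dq_def dist_commute)
    have qd: "q \<in> ball p0 \<delta>" and q\<rho>: "q \<in> ball p0 \<rho>" using qR \<rho> \<delta> by (auto simp: R_def)
    have p0d: "p0 \<in> ball p0 \<delta>" using \<delta> by simp
    have h0b: "\<bar>h0\<bar> \<le> Bb * eL * (2 * dq)"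
    proof -
      have "\<bar>h q - h p0\<bar> \<le> Bb * eL * (\<bar>fst q - fst p0\<bar> + \<bar>snd q - snd p0\<bar>)" using lin2[OF qd p0d] by blast
      also have "\<dots> \<le> Bb * eL * (2 * dq)" using abs_diff_le_dist[of q p0] Bb eL by (intro mult_left_mono) (auto simp: dq_def)
      finally show ?thesis using hp0 by (simp add: h0_def)
    qed
    show False
    proof (cases "\<kappa>a \<noteq> 0")
      case True
      then have c0a: "c0 = \<bar>\<kappa>a\<bar> / \<beta>" by (simp add: c0_def)
      define X1 where "X1 = G1 u q"
      define X2 where "X2 = G2 u q"
      have aX: "a1 * X1 + a2 * X2 = 0" using Gq by (simp add: G_def X1_def X2_def)
      have bX: "b1 * X1 + b2 * X2 = h0" by (simp add: h_def X1_def X2_def h0_def)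
      have nz: "G1 u q \<noteq> 0 \<or> G2 u q \<noteq> 0" using hq by (auto simp: h_def)
      have Qe: "\<beta>\<^sup>2 * Q0 X1 X2 = h0\<^sup>2 * \<kappa>a" using ident[of X1 X2] aX bX by (simp add: power2_eq_square)
      have Ne: "\<beta> * (X1\<^sup>2 + X2\<^sup>2) = h0\<^sup>2" using lagr[of X1 X2] aX bX by simp
      have "\<bar>Q0 X1 X2\<bar> = h0\<^sup>2 * \<bar>\<kappa>a\<bar> / \<beta>\<^sup>2" using Qe \<beta>
        by (simp add: field_simps abs_mult) (metis abs_mult abs_of_nonneg zero_le_power2)
      also have "\<dots> = (\<bar>\<kappa>a\<bar> / \<beta>) * (h0\<^sup>2 / \<beta>)" by (simp add: power2_eq_square)
      also have "\<dots> = c0 * (X1\<^sup>2 + X2\<^sup>2)"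
      proof -
        have N': "X1\<^sup>2 + X2\<^sup>2 = h0\<^sup>2 / \<beta>" using Ne \<beta> by (simp add: field_simps)
        show ?thesis by (simp add: c0a N')
      qed
      finally have "\<bar>Q0 X1 X2\<bar> \<ge> c0 * (X1\<^sup>2 + X2\<^sup>2)" by simp
      then have "c0/2 * dq \<le> C * (\<bar>X1\<bar> + \<bar>X2\<bar>)" using key[OF q\<rho> nz] by (simp add: X1_def X2_def dq_def)
      also have "\<dots> \<le> C * (\<Lambda> * (\<bar>0\<bar> + \<bar>h0\<bar>))" using reconb[of X1 X2] aX bX C by (intro mult_left_mono) auto
      also have "\<dots> \<le> C * (\<Lambda> * (Bb * eL * (2 * dq)))" using h0b C \<Lambda> by (intro mult_left_mono) auto
      also have "\<dots> = 2 * dq * (C * \<Lambda> * Bb * eL)" by (simp add: algebra_simps)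
      also have "\<dots> \<le> 2 * dq * (c0 / 20)" using K0 dq by (intro mult_left_mono) auto
      finally show False using dq c0 by (simp add: field_simps)
    next
      case False
      then have ka0: "\<kappa>a = 0" and kb: "\<kappa>b \<noteq> 0" using kap by auto
      have c0b: "c0 = \<bar>\<kappa>b\<bar> / (5 * \<beta>)" using ka0 by (simp add: c0_def)
      define s where "s = h0 / \<omega>"
      define p where "p = (fst q + s * w1, snd q + s * w2)"
      have sW: "\<bar>s\<bar> * Wn \<le> dq / 5"
      proof -
        have "\<bar>s\<bar> * Wn = \<bar>h0\<bar> * Wn / \<omega>" using \<omega> by (simp add: s_def abs_divide)
        also have "\<dots> \<le> Bb * eL * (2 * dq) * Wn / \<omega>" using h0b Wn \<omega> by (intro divide_right_mono mult_right_mono) auto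
        also have "\<dots> = 2 * dq * (Bb * eL * Wn / \<omega>)" by (simp add: algebra_simps)
        also have "\<dots> \<le> 2 * dq * (1/10)" using K1 dq by (intro mult_left_mono) auto
        finally show ?thesis by simp
      qed
      have sW2: "\<bar>s\<bar> * Wn = \<bar>h0\<bar> * (Wn / \<omega>)" using \<omega> by (simp add: s_def abs_divide)
      have dpq: "dist p q \<le> \<bar>s\<bar> * Wn"
        using dist_pair_le[of q "fst q + s * w1" "snd q + s * w2"]
        by (simp add: p_def dist_commute Wn_def abs_mult distrib_left)
      define dp where "dp = dist p p0"
      have dp1: "dp \<le> dq + dq / 5" using dist_triangle[of p p0 q] dpq sW by (simp add: dp_def dq_def)
      have dp2: "dp \<ge> dq - dq / 5" using dist_triangle[of q p0 p] dpq sW by (simp add: dp_def dq_def dist_commute)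
      have pd: "p \<in> ball p0 \<delta>" and p\<rho>: "p \<in> ball p0 \<rho>"
        using dp1 dqR \<rho> \<delta> by (auto simp: dp_def dist_commute R_def)
      have lpq: "\<bar>h p - h q\<bar> \<le> Bb * eL * (\<bar>s\<bar> * Wn)" and
        lGpq: "\<bar>G p - G q - w1 * (fst p - fst q) - w2 * (snd p - snd q)\<bar> \<le> Bb * eL * (\<bar>s\<bar> * Wn)"
        using lin2[OF pd qd] by (simp_all add: p_def abs_mult Wn_def distrib_left)
      have errb: "Bb * eL * (\<bar>s\<bar> * Wn) \<le> \<bar>h0\<bar> / 10"
      proof -
        have "Bb * eL * (\<bar>s\<bar> * Wn) = \<bar>h0\<bar> * (Bb * eL * Wn / \<omega>)" using sW2 by (simp add: algebra_simps)
        also have "\<dots> \<le> \<bar>h0\<bar> * (1/10)" using K1 by (intro mult_left_mono) auto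
        finally show ?thesis by simp
      qed
      have "w1 * (fst p - fst q) + w2 * (snd p - snd q) = s * \<omega>"
        by (simp add: p_def \<omega>_def power2_eq_square algebra_simps)
      also have "\<dots> = h0" using \<omega> by (simp add: s_def)
      finally have wpq: "w1 * (fst p - fst q) + w2 * (snd p - snd q) = h0" .
      define Gp where "Gp = G p"
      define hp where "hp = h p"
      have eG: "\<bar>Gp - h0\<bar> \<le> \<bar>h0\<bar> / 10" using lGpq errb Gq wpq by (simp add: Gp_def algebra_simps)
      have eh: "\<bar>hp - h0\<bar> \<le> \<bar>h0\<bar> / 10" using lpq errb by (simp add: hp_def h0_def)
      have five': "Gp\<^sup>2 + hp\<^sup>2 \<le> 5 * (Gp * hp)"
        using five[of "Gp - h0" h0 "hp - h0"] eG eh by simp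
      have hpnz: "hp \<noteq> 0" using eh hq by (auto simp: h0_def)
      define X1 where "X1 = G1 u p"
      define X2 where "X2 = G2 u p"
      have aX: "a1 * X1 + a2 * X2 = Gp" by (simp add: G_def X1_def X2_def Gp_def)
      have bX: "b1 * X1 + b2 * X2 = hp" by (simp add: h_def X1_def X2_def hp_def)
      have nz: "G1 u p \<noteq> 0 \<or> G2 u p \<noteq> 0" using hpnz by (auto simp: h_def hp_def)
      have Qe: "\<beta>\<^sup>2 * Q0 X1 X2 = - hp * Gp * \<kappa>b" using ident[of X1 X2] aX bX ka0 by simp
      have Ne: "\<beta> * (X1\<^sup>2 + X2\<^sup>2) = Gp\<^sup>2 + hp\<^sup>2" using lagr[of X1 X2] aX bX by simp
      have GPpos: "Gp * hp \<ge> 0" using five' by (smt (verit) zero_le_power2)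
      have "\<bar>Q0 X1 X2\<bar> = (Gp * hp) * \<bar>\<kappa>b\<bar> / \<beta>\<^sup>2"
      proof -
        have "\<bar>\<beta>\<^sup>2 * Q0 X1 X2\<bar> = \<bar>Gp * hp\<bar> * \<bar>\<kappa>b\<bar>" unfolding Qe by (simp add: abs_mult)
        then have "\<bar>\<beta>\<^sup>2 * Q0 X1 X2\<bar> = (Gp * hp) * \<bar>\<kappa>b\<bar>" using GPpos by simp
        then show ?thesis using \<beta> by (simp add: abs_mult field_simps)
      qed
      also have "\<dots> \<ge> ((Gp\<^sup>2 + hp\<^sup>2) / 5) * \<bar>\<kappa>b\<bar> / \<beta>\<^sup>2"
        using five' \<beta> by (intro divide_right_mono mult_right_mono) auto
      finally have "\<bar>Q0 X1 X2\<bar> \<ge> ((Gp\<^sup>2 + hp\<^sup>2) / 5) * \<bar>\<kappa>b\<bar> / \<beta>\<^sup>2" .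
      moreover have "((Gp\<^sup>2 + hp\<^sup>2) / 5) * \<bar>\<kappa>b\<bar> / \<beta>\<^sup>2 = c0 * (X1\<^sup>2 + X2\<^sup>2)"
      proof -
        have N': "X1\<^sup>2 + X2\<^sup>2 = (Gp\<^sup>2 + hp\<^sup>2) / \<beta>" using Ne \<beta> by (simp add: field_simps)
        show ?thesis unfolding N' c0b using \<beta> by (simp add: field_simps power2_eq_square)
      qed
      ultimately have "\<bar>Q0 X1 X2\<bar> \<ge> c0 * (X1\<^sup>2 + X2\<^sup>2)" by simp
      then have "c0/2 * dp \<le> C * (\<bar>X1\<bar> + \<bar>X2\<bar>)" using key[OF p\<rho> nz] by (simp add: X1_def X2_def dp_def)
      also have "\<dots> \<le> C * (\<Lambda> * (\<bar>Gp\<bar> + \<bar>hp\<bar>))" using reconb[of X1 X2] aX bX C by (intro mult_left_mono) auto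
      also have "\<dots> \<le> C * (\<Lambda> * (\<bar>h0\<bar> * (22/10)))"
      proof -
        have "\<bar>Gp\<bar> \<le> \<bar>Gp - h0\<bar> + \<bar>h0\<bar>" using abs_triangle_ineq[of "Gp - h0" h0] by simp
        moreover have "\<bar>hp\<bar> \<le> \<bar>hp - h0\<bar> + \<bar>h0\<bar>" using abs_triangle_ineq[of "hp - h0" h0] by simp
        ultimately have "\<bar>Gp\<bar> + \<bar>hp\<bar> \<le> \<bar>h0\<bar> * (22/10)" using eG eh by linarith
        then show ?thesis using C \<Lambda> by (intro mult_left_mono) auto
      qed
      also have "\<dots> \<le> C * (\<Lambda> * ((Bb * eL * (2 * dq)) * (22/10)))" using h0b C \<Lambda> by (intro mult_left_mono mult_right_mono) auto
      also have "\<dots> = (44/10) * dq * (C * \<Lambda> * Bb * eL)" by (simp add: algebra_simps)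
      also have "\<dots> \<le> (44/10) * dq * (c0 / 20)" using K0 dq by (intro mult_left_mono) auto
      finally have "c0/2 * dp \<le> (44/10) * dq * (c0 / 20)" .
      moreover have "c0/2 * (dq - dq/5) \<le> c0/2 * dp" using dp2 c0 by (intro mult_left_mono) auto
      ultimately show False using dq c0 by (simp add: field_simps)
    qed
  qed
  have RO: "ball p0 R \<subseteq> \<Omega>"
  proof
    fix q assume "q \<in> ball p0 R"
    then have "q \<in> ball p0 \<delta>" using \<rho> \<delta> by (auto simp: R_def)
    then show "q \<in> \<Omega>" using \<delta>(2) by auto
  qed
  have Seq: "q \<in> sing_set \<Omega> u \<longleftrightarrow> G q = 0" if qR: "q \<in> ball p0 R" for q
  proof
    assume "q \<in> sing_set \<Omega> u"
    then show "G q = 0" by (simp add: sing_iff G_def)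
  next
    assume Gq: "G q = 0"
    then have hq: "h q = 0" using claim[OF qR] by simp
    have "\<beta> * G1 u q = a1 * G q + b1 * h q"
      by (simp add: G_def h_def a1_def a2_def \<beta>_def algebra_simps power2_eq_square)
    then have "G1 u q = 0" using Gq hq \<beta> by simp
    moreover have "\<beta> * G2 u q = a2 * G q + b2 * h q"
      by (simp add: G_def h_def a1_def a2_def \<beta>_def algebra_simps power2_eq_square)
    then have "G2 u q = 0" using Gq hq \<beta> by simp
    ultimately show "q \<in> sing_set \<Omega> u" using RO qR by (auto simp: sing_iff)
  qed
  define fx where "fx r = a1 * px (px u) r + a2 * (px (py u) r + 1)" for r
  define fy where "fy r = a1 * (py (px u) r - 1) + a2 * py (py u) r" for r
  have fxy0: "fx p0 \<noteq> 0 \<or> fy p0 \<noteq> 0"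
  proof -
    have "fx p0 = w1" "fy p0 = w2" by (simp_all add: fx_def fy_def w1_def w2_def m11_def m12_def m21_def m22_def)
    then show ?thesis using wnz by auto
  qed
  have dx: "((\<lambda>t. G (t, snd r)) has_real_derivative fx r) (at (fst r))" if "r \<in> ball p0 R" for r
  proof -
    have rO: "r \<in> \<Omega>" using that RO by auto
    show ?thesis unfolding G_def fx_def
      using G_derivs(1,3)[OF C2 rO] by (auto intro!: derivative_eq_intros)
  qed
  have dy: "((\<lambda>t. G (fst r, t)) has_real_derivative fy r) (at (snd r))" if "r \<in> ball p0 R" for r
  proof -
    have rO: "r \<in> \<Omega>" using that RO by auto
    show ?thesis unfolding G_def fy_def
      using G_derivs(2,4)[OF C2 rO] by (auto intro!: derivative_eq_intros)
  qed
  have cfx: "continuous_on (ball p0 R) fx" unfolding fx_def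
    using CC(4,6) RO by (auto intro!: continuous_intros intro: continuous_on_subset)
  have cfy: "continuous_on (ball p0 R) fy" unfolding fy_def
    using CC(5,7) RO by (auto intro!: continuous_intros intro: continuous_on_subset)
  have p0R: "p0 \<in> ball p0 R" using R by simp
  obtain W \<gamma> a b where W: "open W" "p0 \<in> W" "W \<subseteq> ball p0 R" "C1_curve \<gamma> a b" "p0 \<in> \<gamma> ` {a<..<b}"
    "W \<inter> {p. G p = 0} = \<gamma> ` {a<..<b}"
    using curve_from_ift[OF open_ball p0R Gp0 fxy0 dx dy cfx cfy] by blast
  have "W \<inter> sing_set \<Omega> u = W \<inter> {p. G p = 0}" using Seq W(3) by auto
  then show ?thesis using W RO by (intro exI[of _ W]) auto
qed

theorem theorem3p3:
  fixes \<Omega> :: "(real \<times> real) set" and u :: "real \<times> real \<Rightarrow> real" and p0 :: "real \<times> real"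
  assumes "open \<Omega>" and "connected \<Omega>"
    and "C2_on \<Omega> u"
    and "p0 \<in> sing_set \<Omega> u"
    and "\<exists>C>0. \<exists>e>0. \<forall>p\<in>ball p0 e \<inter> \<Omega>. p \<notin> sing_set \<Omega> u \<longrightarrow>
            \<bar>Hcurv u p\<bar> \<le> C / dist p p0"
  shows "(p0 islimpt sing_set \<Omega> u \<longleftrightarrow> detU u p0 = 0) \<and>
         (detU u p0 = 0 \<longleftrightarrow>
            (\<exists>W. open W \<and> p0 \<in> W \<and> W \<subseteq> \<Omega> \<and>
               (\<exists>\<gamma> a b. C1_curve \<gamma> a b \<and> p0 \<in> \<gamma> ` {a<..<b} \<and>
                   W \<inter> sing_set \<Omega> u = \<gamma> ` {a<..<b})))"
proof -
  let ?curve = "\<exists>W. open W \<and> p0 \<in> W \<and> W \<subseteq> \<Omega> \<and>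
               (\<exists>\<gamma> a b. C1_curve \<gamma> a b \<and> p0 \<in> \<gamma> ` {a<..<b} \<and>
                   W \<inter> sing_set \<Omega> u = \<gamma> ` {a<..<b})"
  have A: "detU u p0 \<noteq> 0 \<Longrightarrow> \<not> p0 islimpt sing_set \<Omega> u"
    using partA[OF assms(1) assms(3) assms(4)] by blast
  have Cc: "detU u p0 = 0 \<Longrightarrow> ?curve"
    using partC[OF assms(1) assms(3) assms(4) assms(5)] by blast
  have B: "?curve \<Longrightarrow> p0 islimpt sing_set \<Omega> u"
  proof -
    assume ?curve
    then obtain W \<gamma> a b where "open W" "p0 \<in> W" "C1_curve \<gamma> a b" "p0 \<in> \<gamma> ` {a<..<b}"
      "W \<inter> sing_set \<Omega> u = \<gamma> ` {a<..<b}" by blast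
    then show ?thesis by (rule partB)
  qed
  show ?thesis using A B Cc by blast
qed

end
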